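(* Let $X$ be a locally solid vector lattice. Then each of $Orth_n(X)$, $Orth_b(X)$ and $Orth_c(X)$ is a vector lattice (under the order inherited from $Orth(X)$). In particular, if $T$ belongs to one of these spaces, then its modulus $|T|$ exists and belongs to the same space.
   Context: All vector lattices are Archimedean. For $x,y$ in a vector lattice, $x\perp y$ means $|x|\wedge|y|=0$. A linear operator $T:X\to X$ is band preserving if $x\perp y$ implies $T(x)\perp y$. An orthomorphism on $X$ is an order bounded band preserving linear operator; $Orth(X)$ is the vector lattice of all orthomorphisms on $X$ (ordered by $S\le T$ iff $S(x)\le T(x)$ for all $x\ge 0$). A locally solid vector lattice is a vector lattice with a linear topology having a base of solid zero neighborhoods. An orthomorphism $T$ on a locally solid vector lattice $X$ is $nb$-bounded if there is a zero neighborhood $U$ such that $T(U)$ is topologically bounded; it is $bb$-bounded if it maps topologically bounded sets to topologically bounded sets. $Orth_n(X)$, $Orth_b(X)$, $Orth_c(X)$ denote the sets of $nb$-bounded, $bb$-bounded, and continuous orthomorphisms on $X$, respectively. *)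

theory Defs
  imports "HOL-Analysis.Analysis"
begin

text \<open>Vector lattices are modelled by a type of class ordered_real_vector + lattice
  (a Riesz space), together with an explicit Archimedean hypothesis.\<close>

definition vl_archimedean :: "('a::{ordered_real_vector, lattice}) itself \<Rightarrow> bool" where
  "vl_archimedean _ \<longleftrightarrow>
     (\<forall>x y::'a. 0 \<le> x \<and> (\<forall>n::nat. real n *\<^sub>R x \<le> y) \<longrightarrow> x = 0)"

definition vabs :: "'a::{ordered_real_vector, lattice} \<Rightarrow> 'a" where
  "vabs x = sup x (- x)"

definition vdisj :: "'a::{ordered_real_vector, lattice} \<Rightarrow> 'a \<Rightarrow> bool" where
  "vdisj x y \<longleftrightarrow> inf (vabs x) (vabs y) = 0"

definition band_preserving :: "('a::{ordered_real_vector, lattice} \<Rightarrow> 'a) \<Rightarrow> bool" where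
  "band_preserving T \<longleftrightarrow> (\<forall>x y. vdisj x y \<longrightarrow> vdisj (T x) y)"

definition order_bounded_op :: "('a::{ordered_real_vector, lattice} \<Rightarrow> 'a) \<Rightarrow> bool" where
  "order_bounded_op T \<longleftrightarrow>
     (\<forall>a b. a \<le> b \<longrightarrow> (\<exists>c d. \<forall>x. a \<le> x \<and> x \<le> b \<longrightarrow> c \<le> T x \<and> T x \<le> d))"

definition Orth :: "('a::{ordered_real_vector, lattice} \<Rightarrow> 'a) set" where
  "Orth = {T. linear T \<and> order_bounded_op T \<and> band_preserving T}"

definition orth_le :: "('a::{ordered_real_vector, lattice} \<Rightarrow> 'a) \<Rightarrow> ('a \<Rightarrow> 'a) \<Rightarrow> bool" where
  "orth_le S T \<longleftrightarrow> (\<forall>x. 0 \<le> x \<longrightarrow> S x \<le> T x)"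

definition orth_sup_of :: "('a::{ordered_real_vector, lattice} \<Rightarrow> 'a) \<Rightarrow> ('a \<Rightarrow> 'a) \<Rightarrow> ('a \<Rightarrow> 'a) \<Rightarrow> bool" where
  "orth_sup_of R S T \<longleftrightarrow> R \<in> Orth \<and> orth_le S R \<and> orth_le T R \<and>
     (\<forall>Q\<in>Orth. orth_le S Q \<and> orth_le T Q \<longrightarrow> orth_le R Q)"

text \<open>A set of operators is a vector lattice under the order inherited from Orth(X):
  a linear subspace of Orth(X) closed under the lattice operations of Orth(X).\<close>
definition orth_vector_sublattice :: "('a::{ordered_real_vector, lattice} \<Rightarrow> 'a) set \<Rightarrow> bool" where
  "orth_vector_sublattice A \<longleftrightarrow>
     A \<subseteq> Orth \<and> (\<lambda>x. 0) \<in> A \<and>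
     (\<forall>S\<in>A. \<forall>T\<in>A. (\<lambda>x. S x + T x) \<in> A) \<and>
     (\<forall>c::real. \<forall>T\<in>A. (\<lambda>x. c *\<^sub>R T x) \<in> A) \<and>
     (\<forall>S\<in>A. \<forall>T\<in>A. \<exists>R\<in>A. orth_sup_of R S T)"

definition zero_nbhd :: "'a::real_vector topology \<Rightarrow> 'a set \<Rightarrow> bool" where
  "zero_nbhd \<tau> U \<longleftrightarrow> (\<exists>V. openin \<tau> V \<and> 0 \<in> V \<and> V \<subseteq> U)"

definition solid_set :: "'a::{ordered_real_vector, lattice} set \<Rightarrow> bool" where
  "solid_set U \<longleftrightarrow> (\<forall>x y. y \<in> U \<and> vabs x \<le> vabs y \<longrightarrow> x \<in> U)"

definition linear_topology :: "'a::real_vector topology \<Rightarrow> bool" where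
  "linear_topology \<tau> \<longleftrightarrow> topspace \<tau> = UNIV \<and>
     continuous_map (prod_topology \<tau> \<tau>) \<tau> (\<lambda>(x, y). x + y) \<and>
     continuous_map (prod_topology euclideanreal \<tau>) \<tau> (\<lambda>(c, x). c *\<^sub>R x)"

definition locally_solid :: "'a::{ordered_real_vector, lattice} topology \<Rightarrow> bool" where
  "locally_solid \<tau> \<longleftrightarrow> linear_topology \<tau> \<and>
     (\<forall>U. zero_nbhd \<tau> U \<longrightarrow> (\<exists>V. zero_nbhd \<tau> V \<and> solid_set V \<and> V \<subseteq> U))"

definition top_bounded :: "'a::real_vector topology \<Rightarrow> 'a set \<Rightarrow> bool" where
  "top_bounded \<tau> B \<longleftrightarrow> (\<forall>U. zero_nbhd \<tau> U \<longrightarrow> (\<exists>c>0. B \<subseteq> (\<lambda>x. c *\<^sub>R x) ` U))"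

definition Orth_n :: "'a::{ordered_real_vector, lattice} topology \<Rightarrow> ('a \<Rightarrow> 'a) set" where
  "Orth_n \<tau> = {T \<in> Orth. \<exists>U. zero_nbhd \<tau> U \<and> top_bounded \<tau> (T ` U)}"

definition Orth_b :: "'a::{ordered_real_vector, lattice} topology \<Rightarrow> ('a \<Rightarrow> 'a) set" where
  "Orth_b \<tau> = {T \<in> Orth. \<forall>B. top_bounded \<tau> B \<longrightarrow> top_bounded \<tau> (T ` B)}"

definition Orth_c :: "'a::{ordered_real_vector, lattice} topology \<Rightarrow> ('a \<Rightarrow> 'a) set" where
  "Orth_c \<tau> = {T \<in> Orth. continuous_map \<tau> \<tau> T}"

end

theory Submission
  imports Defs
begin


definition pos :: "'a::{ordered_real_vector, lattice} \<Rightarrow> ('a::{ordered_real_vector, lattice})" where "pos a = sup a 0"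
definition neg :: "'a::{ordered_real_vector, lattice} \<Rightarrow> ('a::{ordered_real_vector, lattice})" where "neg a = sup (- a) 0"

lemma add_sup_l: "(a::'a::{ordered_real_vector, lattice}) + sup b c = sup (a + b) (a + c)"
proof (rule antisym)
  have "b \<le> sup (a + b) (a + c) - a" "c \<le> sup (a + b) (a + c) - a"
    by (simp_all add: le_diff_eq add.commute)
  then have "sup b c \<le> sup (a + b) (a + c) - a" by simp
  then show "a + sup b c \<le> sup (a + b) (a + c)" by (simp add: le_diff_eq add.commute)
qed (simp add: add_left_mono)

lemma add_inf_l: "(a::'a::{ordered_real_vector, lattice}) + inf b c = inf (a + b) (a + c)"
proof (rule antisym)
  have "inf (a + b) (a + c) - a \<le> b" "inf (a + b) (a + c) - a \<le> c"
    by (simp_all add: diff_le_eq add.commute)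
  then have "inf (a + b) (a + c) - a \<le> inf b c" by simp
  then show "inf (a + b) (a + c) \<le> a + inf b c" by (metis diff_le_eq add.commute)
qed (simp add: add_left_mono)

lemma neg_sup_v: "- sup (a::'a::{ordered_real_vector, lattice}) b = inf (- a) (- b)"
proof (rule antisym)
  have "a \<le> - inf (- a) (- b)" "b \<le> - inf (- a) (- b)" by (rule le_minus_iff[THEN iffD2], simp)+
  then have "sup a b \<le> - inf (- a) (- b)" by simp
  then show "inf (- a) (- b) \<le> - sup a b" by (rule le_minus_iff[THEN iffD2])
qed simp

lemma neg_inf_v: "- inf (a::'a::{ordered_real_vector, lattice}) b = sup (- a) (- b)"
proof -
  have "- sup (- a) (- b) = inf a b" using neg_sup_v[of "-a" "-b"] by simp
  then show ?thesis by (metis minus_minus)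
qed

lemma half_nonneg: "0 \<le> (x::'a::{ordered_real_vector, lattice}) + x \<Longrightarrow> 0 \<le> x"
proof -
  assume "0 \<le> x + x"
  then have "0 \<le> (1/2::real) *\<^sub>R (x + x)" by (intro scaleR_nonneg_nonneg) auto
  then show ?thesis by (simp only: scaleR_half_double)
qed

lemma vabs_ge: "a \<le> vabs (a::'a::{ordered_real_vector, lattice})" "- a \<le> vabs a"
  unfolding vabs_def by (rule sup_ge1, rule sup_ge2)

lemma vabs_nonneg: "0 \<le> vabs (a::'a::{ordered_real_vector, lattice})"
proof -
  have "a + (- a) \<le> vabs a + vabs a" by (rule add_mono[OF vabs_ge])
  then have "0 \<le> vabs a + vabs a" by (simp only: right_minus)
  then show ?thesis by (rule half_nonneg)
qed

lemma vabs_neg[simp]: "vabs (- (a::('a::{ordered_real_vector, lattice}))) = vabs a"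
  unfolding vabs_def by (simp add: sup_commute)

lemma vabs_of_nonneg: "0 \<le> (a::('a::{ordered_real_vector, lattice})) \<Longrightarrow> vabs a = a"
  unfolding vabs_def by (rule sup_absorb1) (metis neg_le_0_iff_le order_trans)

lemma vabs_zero[simp]: "vabs (0::('a::{ordered_real_vector, lattice})) = 0"
  by (rule vabs_of_nonneg) simp

lemma vabs_le: "(a::('a::{ordered_real_vector, lattice})) \<le> e \<Longrightarrow> - a \<le> e \<Longrightarrow> vabs a \<le> e"
  unfolding vabs_def by (rule sup_least)

lemma vabs_eq0: "vabs (a::('a::{ordered_real_vector, lattice})) = 0 \<Longrightarrow> a = 0"
proof -
  assume h: "vabs a = 0"
  have "a \<le> 0" using vabs_ge(1)[of a] h by simp
  moreover have "- a \<le> 0" using vabs_ge(2)[of a] h by simp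
  ultimately show ?thesis by (metis antisym neg_le_0_iff_le)
qed

lemma pos_nonneg: "0 \<le> pos (a::('a::{ordered_real_vector, lattice}))" unfolding pos_def by (rule sup_ge2)
lemma neg_nonneg: "0 \<le> neg (a::('a::{ordered_real_vector, lattice}))" unfolding neg_def by (rule sup_ge2)
lemma pos_ge: "(a::('a::{ordered_real_vector, lattice})) \<le> pos a" unfolding pos_def by (rule sup_ge1)
lemma neg_ge: "- (a::('a::{ordered_real_vector, lattice})) \<le> neg a" unfolding neg_def by (rule sup_ge1)
lemma pos_of_nonneg: "0 \<le> (a::('a::{ordered_real_vector, lattice})) \<Longrightarrow> pos a = a" unfolding pos_def by (rule sup_absorb1)
lemma neg_of_nonneg: "0 \<le> (a::('a::{ordered_real_vector, lattice})) \<Longrightarrow> neg a = 0" unfolding neg_def by (rule sup_absorb2) simp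
lemma pos_mono: "(a::('a::{ordered_real_vector, lattice})) \<le> b \<Longrightarrow> pos a \<le> pos b" unfolding pos_def by (rule sup_mono) auto
lemma neg_eq_pos: "neg (a::('a::{ordered_real_vector, lattice})) = pos (- a)" unfolding pos_def neg_def ..
lemma pos_minus: "pos (- (a::('a::{ordered_real_vector, lattice}))) = neg a" unfolding pos_def neg_def ..

lemma sup_inf_add: "sup (a::('a::{ordered_real_vector, lattice})) b + inf a b = a + b"
proof -
  have "(a + b) + sup (- a) (- b) = sup (a + b + - a) (a + b + - b)" by (rule add_sup_l)
  also have "\<dots> = sup b a" by (simp add: add.commute add.left_commute)
  finally have e: "(a + b) + sup (- a) (- b) = sup a b" by (simp add: sup_commute)
  have "(a + b) - inf a b = (a + b) + sup (- a) (- b)" by (simp only: diff_conv_add_uminus neg_inf_v)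
  then have "(a + b) - inf a b = sup a b" using e by simp
  then show ?thesis by (metis diff_add_cancel add.commute)
qed

lemma pos_eq: "pos (a::('a::{ordered_real_vector, lattice})) = a + neg a"
proof -
  have "- neg a = inf a 0" unfolding neg_def using neg_sup_v[of "-a" 0] by simp
  then have "pos a - neg a = sup a 0 + inf a 0" unfolding pos_def by simp
  also have "\<dots> = a" using sup_inf_add[of a 0] by simp
  finally show ?thesis by (metis diff_add_cancel)
qed

lemma pos_neg: "(a::('a::{ordered_real_vector, lattice})) = pos a - neg a" using pos_eq[of a] by simp

lemma inf_pos_neg: "inf (pos (a::('a::{ordered_real_vector, lattice}))) (neg a) = 0"
proof -
  have "inf (pos a) (neg a) = inf (neg a + a) (neg a + 0)" by (simp add: pos_eq add.commute)
  also have "\<dots> = neg a + inf a 0" by (simp only: add_inf_l)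
  also have "inf a 0 = - neg a" unfolding neg_def using neg_sup_v[of "-a" 0] by simp
  finally show ?thesis by simp
qed

lemma vabs_pos_neg: "vabs (a::('a::{ordered_real_vector, lattice})) = pos a + neg a"
proof -
  have "pos a + neg a = sup (pos a) (neg a) + inf (pos a) (neg a)" by (simp only: sup_inf_add)
  also have "\<dots> = sup (pos a) (neg a)" by (simp add: inf_pos_neg)
  also have "\<dots> = sup (vabs a) 0" unfolding pos_def neg_def vabs_def by (simp add: sup_aci)
  also have "\<dots> = vabs a" by (rule sup_absorb1[OF vabs_nonneg])
  finally show ?thesis ..
qed

lemma vabs_eq_pos: "vabs (a::('a::{ordered_real_vector, lattice})) = 2 *\<^sub>R pos a - a"
proof -
  have "vabs a = pos a + (pos a - a)" using vabs_pos_neg[of a] pos_eq[of a] by (simp add: algebra_simps)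
  then show ?thesis by (simp add: scaleR_2 algebra_simps)
qed

lemma pos_le_vabs: "pos (a::('a::{ordered_real_vector, lattice})) \<le> vabs a" using vabs_pos_neg[of a] neg_nonneg[of a] by (metis add_increasing2 order_refl)
lemma neg_le_vabs: "neg (a::('a::{ordered_real_vector, lattice})) \<le> vabs a" using vabs_pos_neg[of a] pos_nonneg[of a] by (metis add_increasing order_refl)

lemma riesz_inf:
  assumes "0 \<le> (u::('a::{ordered_real_vector, lattice}))" "0 \<le> A" "0 \<le> B"
  shows "inf u (A + B) \<le> inf u A + inf u B"
proof -
  define x where "x = inf u (A + B)"
  have "x - inf u A = x + sup (- u) (- A)" using neg_inf_v[of u A] by simp
  also have "\<dots> = sup (x + - u) (x + - A)" by (rule add_sup_l)
  also have "\<dots> \<le> inf u B"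
  proof (rule sup_least)
    have "x \<le> u" unfolding x_def by simp
    then have "x + - u \<le> 0" by (metis diff_conv_add_uminus diff_le_0_iff_le)
    also have "0 \<le> inf u B" using assms by simp
    finally show "x + - u \<le> inf u B" .
    have "x \<le> A + B" unfolding x_def by simp
    then have h1: "x + - A \<le> B" by (metis add.commute diff_conv_add_uminus diff_le_eq)
    have "x + - A \<le> x" using assms(2) by simp
    then have h2: "x + - A \<le> u" using \<open>x \<le> u\<close> by (rule order_trans)
    show "x + - A \<le> inf u B" using h1 h2 by simp
  qed
  finally have "x - inf u A \<le> inf u B" .
  then show ?thesis unfolding x_def by (metis diff_le_eq add.commute)
qed

lemma scale_sup: "0 \<le> c \<Longrightarrow> c *\<^sub>R sup (a::('a::{ordered_real_vector, lattice})) b = sup (c *\<^sub>R a) (c *\<^sub>R b)"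
proof -
  assume c: "0 \<le> c"
  show ?thesis
  proof (cases "c = 0")
    case True then show ?thesis by simp
  next
    case False
    then have cp: "0 < c" using c by simp
    show ?thesis
    proof (rule antisym)
      have "a = (1/c) *\<^sub>R (c *\<^sub>R a)" "b = (1/c) *\<^sub>R (c *\<^sub>R b)" using cp by simp_all
      then have "a \<le> (1/c) *\<^sub>R sup (c *\<^sub>R a) (c *\<^sub>R b)" "b \<le> (1/c) *\<^sub>R sup (c *\<^sub>R a) (c *\<^sub>R b)"
        using cp by (metis less_eq_real_def scaleR_left_mono sup_ge1 zero_le_divide_1_iff,
                     metis less_eq_real_def scaleR_left_mono sup_ge2 zero_le_divide_1_iff)
      then have "sup a b \<le> (1/c) *\<^sub>R sup (c *\<^sub>R a) (c *\<^sub>R b)" by simp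
      then have "c *\<^sub>R sup a b \<le> c *\<^sub>R ((1/c) *\<^sub>R sup (c *\<^sub>R a) (c *\<^sub>R b))"
        using c by (rule scaleR_left_mono)
      then show "c *\<^sub>R sup a b \<le> sup (c *\<^sub>R a) (c *\<^sub>R b)" using cp by simp
    next
      show "sup (c *\<^sub>R a) (c *\<^sub>R b) \<le> c *\<^sub>R sup a b"
        using c by (simp add: scaleR_left_mono)
    qed
  qed
qed

lemma scale_inf: "0 \<le> c \<Longrightarrow> c *\<^sub>R inf (a::('a::{ordered_real_vector, lattice})) b = inf (c *\<^sub>R a) (c *\<^sub>R b)"
proof -
  assume c: "0 \<le> c"
  have "inf a b = - sup (- a) (- b)" using neg_sup_v[of "-a" "-b"] by simp
  then have "c *\<^sub>R inf a b = - (c *\<^sub>R sup (- a) (- b))" by (metis scaleR_minus_right)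
  also have "\<dots> = - sup (c *\<^sub>R (- a)) (c *\<^sub>R (- b))" by (simp only: scale_sup[OF c])
  also have "\<dots> = - sup (- (c *\<^sub>R a)) (- (c *\<^sub>R b))" by (simp only: scaleR_minus_right)
  also have "\<dots> = inf (c *\<^sub>R a) (c *\<^sub>R b)" by (simp only: neg_sup_v minus_minus)
  finally show ?thesis .
qed

lemma pos_scale: "0 \<le> c \<Longrightarrow> pos (c *\<^sub>R (a::('a::{ordered_real_vector, lattice}))) = c *\<^sub>R pos a"
  unfolding pos_def using scale_sup[of c a 0] by simp
lemma neg_scale: "0 \<le> c \<Longrightarrow> neg (c *\<^sub>R (a::('a::{ordered_real_vector, lattice}))) = c *\<^sub>R neg a"
  unfolding neg_def using scale_sup[of c "-a" 0] by simp

lemma vabs_scale: "vabs (c *\<^sub>R (a::('a::{ordered_real_vector, lattice}))) = \<bar>c\<bar> *\<^sub>R vabs a"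
proof (cases "0 \<le> c")
  case True then show ?thesis unfolding vabs_def using scale_sup[of c a "-a"] by simp
next
  case False
  then have "c *\<^sub>R a = - (\<bar>c\<bar> *\<^sub>R a)" by simp
  then show ?thesis unfolding vabs_def using scale_sup[of "\<bar>c\<bar>" a "-a"] by (simp add: sup_commute)
qed

lemma vabs_triangle: "vabs ((a::('a::{ordered_real_vector, lattice})) + b) \<le> vabs a + vabs b"
proof (rule vabs_le)
  show "a + b \<le> vabs a + vabs b" by (rule add_mono[OF vabs_ge(1) vabs_ge(1)])
  have "- a + - b \<le> vabs a + vabs b" by (rule add_mono[OF vabs_ge(2) vabs_ge(2)])
  then show "- (a + b) \<le> vabs a + vabs b" by simp
qed


lemma inf_zero_scale:
  assumes "0 \<le> (p::('a::{ordered_real_vector, lattice}))" "0 \<le> q" "inf p q = 0" "0 \<le> c"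
  shows "inf p (c *\<^sub>R q) = 0"
proof (rule antisym)
  define k where "k = max 1 c"
  have k1: "1 \<le> k" and kc: "c \<le> k" and k0: "0 \<le> k" unfolding k_def by auto
  have "p \<le> k *\<^sub>R p" using scaleR_right_mono[OF k1 assms(1)] by simp
  moreover have "c *\<^sub>R q \<le> k *\<^sub>R q" using scaleR_right_mono[OF kc assms(2)] .
  ultimately have "inf p (c *\<^sub>R q) \<le> inf (k *\<^sub>R p) (k *\<^sub>R q)" by (rule inf_mono)
  also have "\<dots> = k *\<^sub>R inf p q" by (rule scale_inf[OF k0, symmetric])
  finally show "inf p (c *\<^sub>R q) \<le> 0" using assms(3) by simp
  show "0 \<le> inf p (c *\<^sub>R q)" using assms by (simp add: scaleR_nonneg_nonneg)
qed

lemma vdisj_sym: "vdisj (x::('a::{ordered_real_vector, lattice})) y \<longleftrightarrow> vdisj y x"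
  unfolding vdisj_def by (simp add: inf_commute)

lemma vdisj_mono: "vabs (x'::('a::{ordered_real_vector, lattice})) \<le> vabs x \<Longrightarrow> vdisj x y \<Longrightarrow> vdisj x' y"
  unfolding vdisj_def
proof -
  assume "vabs x' \<le> vabs x" "inf (vabs x) (vabs y) = 0"
  then have "inf (vabs x') (vabs y) \<le> 0" by (metis inf_mono order_refl)
  moreover have "0 \<le> inf (vabs x') (vabs y)" by (simp add: vabs_nonneg)
  ultimately show "inf (vabs x') (vabs y) = 0" by (rule antisym)
qed

lemma vdisj_zero: "vdisj (0::('a::{ordered_real_vector, lattice})) y"
  unfolding vdisj_def using vabs_nonneg[of y] by (simp add: inf_absorb1)

lemma vdisj_add: "vdisj (x::('a::{ordered_real_vector, lattice})) y \<Longrightarrow> vdisj z y \<Longrightarrow> vdisj (x + z) y"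
  unfolding vdisj_def
proof -
  assume a: "inf (vabs x) (vabs y) = 0" "inf (vabs z) (vabs y) = 0"
  have "inf (vabs y) (vabs (x + z)) \<le> inf (vabs y) (vabs x + vabs z)"
    by (rule inf_mono[OF order_refl vabs_triangle])
  also have "\<dots> \<le> inf (vabs y) (vabs x) + inf (vabs y) (vabs z)"
    by (rule riesz_inf) (simp_all add: vabs_nonneg)
  also have "\<dots> = 0" using a by (simp add: inf_commute)
  finally have "inf (vabs (x + z)) (vabs y) \<le> 0" by (simp add: inf_commute)
  moreover have "0 \<le> inf (vabs (x + z)) (vabs y)" by (simp add: vabs_nonneg)
  ultimately show "inf (vabs (x + z)) (vabs y) = 0" by (rule antisym)
qed

lemma vdisj_scale: "vdisj (x::('a::{ordered_real_vector, lattice})) y \<Longrightarrow> vdisj (c *\<^sub>R x) y"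
  unfolding vdisj_def vabs_scale
  using inf_zero_scale[of "vabs y" "vabs x" "\<bar>c\<bar>"] by (simp add: vabs_nonneg inf_commute)

lemma vdisj_self: "vdisj (x::('a::{ordered_real_vector, lattice})) x \<Longrightarrow> x = 0"
  unfolding vdisj_def by (simp add: vabs_eq0)

lemma vdisj_nonneg: "0 \<le> (p::('a::{ordered_real_vector, lattice})) \<Longrightarrow> 0 \<le> q \<Longrightarrow> vdisj p q \<longleftrightarrow> inf p q = 0"
  unfolding vdisj_def by (simp add: vabs_of_nonneg)

lemma vdisj_pos_neg: "vdisj (pos (a::('a::{ordered_real_vector, lattice}))) (neg a)"
  by (simp add: vdisj_nonneg pos_nonneg neg_nonneg inf_pos_neg)

definition bd :: "('a::{ordered_real_vector, lattice}) \<Rightarrow> ('a::{ordered_real_vector, lattice}) \<Rightarrow> bool" where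
  "bd A z \<longleftrightarrow> (\<forall>g. vdisj g A \<longrightarrow> vdisj g z)"

lemma bd_refl: "bd A A" unfolding bd_def by simp

lemma bd_solid: "bd A (z::('a::{ordered_real_vector, lattice})) \<Longrightarrow> vabs w \<le> vabs z \<Longrightarrow> bd A w"
  unfolding bd_def by (metis vdisj_sym vdisj_mono)

lemma bd_add: "bd A (z1::('a::{ordered_real_vector, lattice})) \<Longrightarrow> bd A z2 \<Longrightarrow> bd A (z1 + z2)"
  unfolding bd_def by (metis vdisj_sym vdisj_add)

lemma bd_disj: "bd A (z::('a::{ordered_real_vector, lattice})) \<Longrightarrow> vdisj A B \<Longrightarrow> vdisj z B"
  unfolding bd_def by (metis vdisj_sym)

lemma bd_of_le: "vabs (z::('a::{ordered_real_vector, lattice})) \<le> vabs A \<Longrightarrow> bd A z"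
  using bd_solid[OF bd_refl] .

lemma bd_trans: "bd A (z::('a::{ordered_real_vector, lattice})) \<Longrightarrow> bd z w \<Longrightarrow> bd A w"
  unfolding bd_def by blast

lemma bd_T: "band_preserving T \<Longrightarrow> bd (z::('a::{ordered_real_vector, lattice})) (T z)"
  unfolding bd_def band_preserving_def by (metis vdisj_sym)

lemma bd_vabs: "bd A (z::('a::{ordered_real_vector, lattice})) \<Longrightarrow> bd A (vabs z)"
  by (erule bd_solid) (simp add: vabs_of_nonneg vabs_nonneg)

lemma bd_split:
  assumes "bd A (z::('a::{ordered_real_vector, lattice}))" "bd (P + Q) z" "0 \<le> P" "0 \<le> Q" "vdisj A Q"
  shows "bd P z"
  unfolding bd_def
proof (intro allI impI)
  fix g assume gP: "vdisj g P"
  define h where "h = inf (vabs g) (vabs z)"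
  have h0: "0 \<le> h" unfolding h_def by (simp add: vabs_nonneg)
  then have vh: "vabs h = h" by (rule vabs_of_nonneg)
  have hz: "vabs h \<le> vabs z" unfolding vh unfolding h_def by simp
  have hg: "vabs h \<le> vabs g" unfolding vh unfolding h_def by simp
  have "bd A h" by (rule bd_solid[OF assms(1) hz])
  then have hQ: "vdisj h Q" using assms(5) by (rule bd_disj)
  have hP: "vdisj h P" using vdisj_mono[OF hg gP] .
  have "vdisj (P + Q) h" using vdisj_add[of P h Q] hP hQ by (simp add: vdisj_sym)
  moreover have "bd (P + Q) h" by (rule bd_solid[OF assms(2) hz])
  ultimately have "vdisj h h" unfolding bd_def by (metis vdisj_sym)
  then have "h = 0" by (rule vdisj_self)
  then show "vdisj g z" unfolding vdisj_def h_def .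
qed


lemma orthD: "T \<in> Orth \<Longrightarrow> linear (T::('a::{ordered_real_vector, lattice})\<Rightarrow>('a::{ordered_real_vector, lattice})) \<and> order_bounded_op T \<and> band_preserving T"
  unfolding Orth_def by simp

lemma lin_add: "linear (T::('a::{ordered_real_vector, lattice})\<Rightarrow>('a::{ordered_real_vector, lattice})) \<Longrightarrow> T (a + b) = T a + T b" by (rule real_vector.linear_add)
lemma lin_scale: "linear (T::('a::{ordered_real_vector, lattice})\<Rightarrow>('a::{ordered_real_vector, lattice})) \<Longrightarrow> T (c *\<^sub>R a) = c *\<^sub>R T a" by (rule real_vector.linear_scale)
lemma lin_diff: "linear (T::('a::{ordered_real_vector, lattice})\<Rightarrow>('a::{ordered_real_vector, lattice})) \<Longrightarrow> T (a - b) = T a - T b" by (rule real_vector.linear_diff)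
lemma lin_neg: "linear (T::('a::{ordered_real_vector, lattice})\<Rightarrow>('a::{ordered_real_vector, lattice})) \<Longrightarrow> T (- a) = - T a" by (rule real_vector.linear_neg)
lemma lin_0: "linear (T::('a::{ordered_real_vector, lattice})\<Rightarrow>('a::{ordered_real_vector, lattice})) \<Longrightarrow> T 0 = 0" by (rule real_vector.linear_0)

lemma orth_bound:
  assumes "T \<in> Orth" "0 \<le> (x::('a::{ordered_real_vector, lattice}))"
  shows "\<exists>e\<ge>0. \<forall>z. - x \<le> z \<and> z \<le> x \<longrightarrow> vabs (T z) \<le> e"
proof -
  have "- x \<le> x" using assms(2) by (metis neg_le_0_iff_le order_trans)
  then obtain c d where cd: "\<And>z. - x \<le> z \<and> z \<le> x \<Longrightarrow> c \<le> T z \<and> T z \<le> d"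
    using orthD[OF assms(1)] unfolding order_bounded_op_def by blast
  define e where "e = vabs c + vabs d"
  have e0: "0 \<le> e" unfolding e_def by (simp add: vabs_nonneg add_nonneg_nonneg)
  have "vabs (T z) \<le> e" if "- x \<le> z \<and> z \<le> x" for z
  proof (rule vabs_le)
    have "T z \<le> d" using cd[OF that] by simp
    also have "d \<le> vabs d" by (rule vabs_ge)
    also have "vabs d \<le> e" unfolding e_def using vabs_nonneg[of c] by simp
    finally show "T z \<le> e" .
    have "- T z \<le> - c" using cd[OF that] by simp
    also have "- c \<le> vabs c" by (rule vabs_ge)
    also have "vabs c \<le> e" unfolding e_def using vabs_nonneg[of d] by simp
    finally show "- T z \<le> e" .
  qed
  then show ?thesis using e0 by blast
qed

lemma bound_scale:
  assumes "\<forall>z. - x \<le> z \<and> z \<le> x \<longrightarrow> vabs (T z) \<le> e" "linear (T::('a::{ordered_real_vector, lattice})\<Rightarrow>('a::{ordered_real_vector, lattice}))" "0 < \<delta>"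
    "- (\<delta> *\<^sub>R x) \<le> z" "z \<le> \<delta> *\<^sub>R x"
  shows "vabs (T z) \<le> \<delta> *\<^sub>R e"
proof -
  define z' where "z' = (1/\<delta>) *\<^sub>R z"
  have d0: "0 \<le> 1/\<delta>" using assms(3) by simp
  have "(1/\<delta>) *\<^sub>R (- (\<delta> *\<^sub>R x)) \<le> z'" unfolding z'_def by (rule scaleR_left_mono[OF assms(4) d0])
  then have l: "- x \<le> z'" using assms(3) by simp
  have "z' \<le> (1/\<delta>) *\<^sub>R (\<delta> *\<^sub>R x)" unfolding z'_def by (rule scaleR_left_mono[OF assms(5) d0])
  then have u: "z' \<le> x" using assms(3) by simp
  have zz: "z = \<delta> *\<^sub>R z'" unfolding z'_def using assms(3) by simp
  have "vabs (T z) = \<delta> *\<^sub>R vabs (T z')" unfolding zz lin_scale[OF assms(2)] vabs_scale using assms(3) by simp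
  also have "\<dots> \<le> \<delta> *\<^sub>R e" using assms(1) l u assms(3) by (simp add: scaleR_left_mono)
  finally show ?thesis .
qed

lemma inf_pos_diff: "inf (a::('a::{ordered_real_vector, lattice})) b + pos (a - b) = a"
proof -
  have "- pos (a - b) = inf (b - a) 0" unfolding pos_def using neg_sup_v[of "a - b" 0] by simp
  then have "a - pos (a - b) = inf (a + (b - a)) (a + 0)" by (simp only: diff_conv_add_uminus add_inf_l)
  then have "a - pos (a - b) = inf a b" by (simp add: inf_commute)
  then show ?thesis by (metis diff_add_cancel)
qed

lemma clamp:
  assumes "0 \<le> (w::('a::{ordered_real_vector, lattice}))"
  shows "- w \<le> sup (inf s w) (- w)" "sup (inf s w) (- w) \<le> w"
    "vabs (s - sup (inf s w) (- w)) \<le> pos (s - w) + pos (- s - w)"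
proof -
  show "- w \<le> sup (inf s w) (- w)" by simp
  have "- w \<le> w" using assms by (metis neg_le_0_iff_le order_trans)
  then show "sup (inf s w) (- w) \<le> w" by simp
  define R where "R = s - sup (inf s w) (- w)"
  have "R = s + inf (- inf s w) w" unfolding R_def by (simp only: diff_conv_add_uminus neg_sup_v minus_minus)
  also have "\<dots> = inf (s + - inf s w) (s + w)" by (rule add_inf_l)
  also have "s + - inf s w = pos (s - w)"
  proof -
    have "s + - inf s w = s + sup (- s) (- w)" by (simp only: neg_inf_v)
    also have "\<dots> = sup (s + - s) (s + - w)" by (rule add_sup_l)
    finally show ?thesis unfolding pos_def by (simp add: sup_commute)
  qed
  finally have R: "R = inf (pos (s - w)) (s + w)" .
  have "pos R \<le> pos (pos (s - w))" unfolding R by (rule pos_mono) simp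
  then have pR: "pos R \<le> pos (s - w)" by (simp add: pos_of_nonneg pos_nonneg)
  have "- R = sup (- pos (s - w)) (- (s + w))" unfolding R by (rule neg_inf_v)
  also have "\<dots> \<le> pos (- s - w)"
  proof (rule sup_least)
    have "- pos (s - w) \<le> 0" using pos_nonneg by simp
    then show "- pos (s - w) \<le> pos (- s - w)" using pos_nonneg order_trans by blast
    have "- (s + w) = - s - w" by simp
    then show "- (s + w) \<le> pos (- s - w)" using pos_ge by metis
  qed
  finally have "neg R \<le> pos (- s - w)" unfolding neg_def by (simp add: pos_nonneg)
  then show "vabs R \<le> pos (s - w) + pos (- s - w)" unfolding vabs_pos_neg using pR by (simp add: add_mono)
qed


lemma step_lemma:
  assumes T: "T \<in> Orth" and x: "0 \<le> (x::('a::{ordered_real_vector, lattice}))" and y: "0 \<le> y"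
    and e: "\<forall>z. - x \<le> z \<and> z \<le> x \<longrightarrow> vabs (T z) \<le> e"
    and d: "0 < \<delta>" and r: "0 \<le> r"
  shows "\<exists>R. inf (pos (T x)) (neg (T y)) \<le> \<delta> *\<^sub>R e + vabs (T R) \<and>
     bd (pos (y - (r + \<delta>) *\<^sub>R x) + pos ((r - \<delta>) *\<^sub>R x - y)) (T R)"
proof -
  have lin: "linear T" and bp: "band_preserving T" using orthD[OF T] by auto
  define v where "v = inf (pos (T x)) (neg (T y))"
  define a where "a = T x"
  define b where "b = T y"
  define s where "s = y - r *\<^sub>R x"
  define w where "w = \<delta> *\<^sub>R x"
  define c where "c = sup (inf s w) (- w)"
  define R where "R = s - c"
  have w0: "0 \<le> w" unfolding w_def using d x by (simp add: scaleR_nonneg_nonneg)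
  note cl = clamp[OF w0, of s, folded c_def, folded R_def]
  have v0: "0 \<le> v" unfolding v_def by (simp add: pos_nonneg neg_nonneg)
  have "r *\<^sub>R a + r *\<^sub>R neg a = r *\<^sub>R pos a" by (simp add: pos_eq scaleR_right_distrib)
  also have "0 \<le> \<dots>" using r by (simp add: pos_nonneg scaleR_nonneg_nonneg)
  finally have h1: "0 \<le> r *\<^sub>R a + r *\<^sub>R neg a" .
  have "- b \<le> (r *\<^sub>R a - b) + r *\<^sub>R neg a" using h1 by (simp add: algebra_simps)
  also have "\<dots> \<le> pos (r *\<^sub>R a - b) + r *\<^sub>R neg a" by (simp add: pos_ge)
  finally have h2: "- b \<le> pos (r *\<^sub>R a - b) + r *\<^sub>R neg a" .
  have h3: "0 \<le> pos (r *\<^sub>R a - b) + r *\<^sub>R neg a"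
    using r by (simp add: pos_nonneg neg_nonneg scaleR_nonneg_nonneg add_nonneg_nonneg)
  have "neg b \<le> pos (r *\<^sub>R a - b) + r *\<^sub>R neg a" unfolding neg_def[of b] by (rule sup_least[OF h2 h3])
  then have "v \<le> pos (r *\<^sub>R a - b) + r *\<^sub>R neg a" unfolding v_def b_def by (meson inf_le2 order_trans)
  then have "v = inf v (pos (r *\<^sub>R a - b) + r *\<^sub>R neg a)" by (simp add: inf_absorb1)
  also have "\<dots> \<le> inf v (pos (r *\<^sub>R a - b)) + inf v (r *\<^sub>R neg a)"
    by (rule riesz_inf[OF v0]) (simp_all add: pos_nonneg neg_nonneg r scaleR_nonneg_nonneg)
  also have "inf v (r *\<^sub>R neg a) = 0"
  proof (rule antisym)
    have "inf v (r *\<^sub>R neg a) \<le> inf (pos a) (r *\<^sub>R neg a)" unfolding v_def a_def by (rule inf_mono) simp_all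
    also have "\<dots> = 0" by (rule inf_zero_scale[OF pos_nonneg neg_nonneg inf_pos_neg r])
    finally show "inf v (r *\<^sub>R neg a) \<le> 0" .
    show "0 \<le> inf v (r *\<^sub>R neg a)" using v0 r by (simp add: neg_nonneg scaleR_nonneg_nonneg)
  qed
  finally have "v \<le> pos (r *\<^sub>R a - b)" by simp
  also have "\<dots> \<le> vabs (r *\<^sub>R a - b)" by (rule pos_le_vabs)
  also have "r *\<^sub>R a - b = - T s" unfolding s_def a_def b_def by (simp add: lin_diff[OF lin] lin_scale[OF lin])
  also have "vabs (- T s) = vabs (T c + T R)" unfolding R_def by (simp add: lin_add[OF lin, symmetric])
  also have "\<dots> \<le> vabs (T c) + vabs (T R)" by (rule vabs_triangle)
  also have "vabs (T c) \<le> \<delta> *\<^sub>R e"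
    by (rule bound_scale[OF e lin d]) (use cl w_def in simp_all)
  finally have main: "v \<le> \<delta> *\<^sub>R e + vabs (T R)" by (simp add: add_right_mono)
  have P: "s - w = y - (r + \<delta>) *\<^sub>R x" unfolding s_def w_def by (simp add: scaleR_left_distrib)
  have Q: "- s - w = (r - \<delta>) *\<^sub>R x - y" unfolding s_def w_def by (simp add: scaleR_left_diff_distrib)
  have "bd (pos (s - w) + pos (- s - w)) R"
    by (rule bd_of_le) (simp add: cl(3) vabs_of_nonneg pos_nonneg add_nonneg_nonneg)
  then have "bd (pos (s - w) + pos (- s - w)) (T R)" by (rule bd_trans[OF _ bd_T[OF bp]])
  then show ?thesis using main unfolding v_def P Q by blast
qed

lemma iter_lemma:
  assumes T: "T \<in> Orth" and x: "0 \<le> (x::('a::{ordered_real_vector, lattice}))" and y: "0 \<le> y"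
    and e: "\<forall>z. - x \<le> z \<and> z \<le> x \<longrightarrow> vabs (T z) \<le> e" and e0: "0 \<le> e"
    and d: "0 < \<delta>"
  shows "\<exists>W. inf (pos (T x)) (neg (T y)) \<le> \<delta> *\<^sub>R e + W \<and> 0 \<le> W \<and>
     W \<le> inf (pos (T x)) (neg (T y)) \<and> bd (pos (y - (2 * real k * \<delta>) *\<^sub>R x)) W"
proof (induction k)
  case 0
  define v where "v = inf (pos (T x)) (neg (T y))"
  have v0: "0 \<le> v" unfolding v_def by (simp add: pos_nonneg neg_nonneg)
  have de: "0 \<le> \<delta> *\<^sub>R e" using d e0 by (simp add: scaleR_nonneg_nonneg)
  have "v \<le> neg (T y)" unfolding v_def by simp
  then have "vabs v \<le> vabs (T y)" using neg_le_vabs[of "T y"] v0 by (simp add: vabs_of_nonneg)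
  moreover have "band_preserving T" using orthD[OF T] by simp
  ultimately have "bd y v" using bd_solid[OF bd_T] by blast
  then have "bd (pos (y - (2 * real 0 * \<delta>) *\<^sub>R x)) v" using y by (simp add: pos_of_nonneg)
  moreover have "v \<le> \<delta> *\<^sub>R e + v" using de by simp
  ultimately show ?case using v0 unfolding v_def by blast
next
  case (Suc k)
  define v where "v = inf (pos (T x)) (neg (T y))"
  define a where "a = 2 * real k * \<delta>"
  have a0: "0 \<le> a" unfolding a_def using d by simp
  obtain W where W: "v \<le> \<delta> *\<^sub>R e + W" "0 \<le> W" "W \<le> v" "bd (pos (y - a *\<^sub>R x)) W"
    using Suc.IH unfolding v_def a_def by blast
  obtain R where R: "v \<le> \<delta> *\<^sub>R e + vabs (T R)"
    "bd (pos (y - ((a + \<delta>) + \<delta>) *\<^sub>R x) + pos (((a + \<delta>) - \<delta>) *\<^sub>R x - y)) (T R)"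
    using step_lemma[OF T x y e d, of "a + \<delta>"] a0 d unfolding v_def by auto
  define W' where "W' = inf W (vabs (T R))"
  have W'0: "0 \<le> W'" unfolding W'_def using W(2) by (simp add: vabs_nonneg)
  have "v \<le> inf (\<delta> *\<^sub>R e + W) (\<delta> *\<^sub>R e + vabs (T R))" using W(1) R(1) by simp
  then have v1: "v \<le> \<delta> *\<^sub>R e + W'" unfolding W'_def by (simp only: add_inf_l)
  have v2: "W' \<le> v" unfolding W'_def using W(3) by (meson inf_le1 order_trans)
  have b1: "bd (pos (y - a *\<^sub>R x)) W'"
  proof (rule bd_solid[OF W(4)])
    have "vabs W' = W'" by (rule vabs_of_nonneg[OF W'0])
    moreover have "vabs W = W" by (rule vabs_of_nonneg[OF W(2)])
    moreover have "W' \<le> W" unfolding W'_def by (rule inf_le1)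
    ultimately show "vabs W' \<le> vabs W" by simp
  qed
  have b2: "bd (pos (y - (a + 2 * \<delta>) *\<^sub>R x) + pos (a *\<^sub>R x - y)) W'"
  proof -
    have e1: "(a + \<delta>) + \<delta> = a + 2 * \<delta>" "(a + \<delta>) - \<delta> = a" by linarith+
    have R2: "bd (pos (y - (a + 2 * \<delta>) *\<^sub>R x) + pos (a *\<^sub>R x - y)) (T R)"
      using R(2) unfolding e1 .
    show ?thesis
    proof (rule bd_solid[OF bd_vabs[OF R2]])
      have "vabs W' = W'" by (rule vabs_of_nonneg[OF W'0])
      moreover have "vabs (vabs (T R)) = vabs (T R)" by (rule vabs_of_nonneg[OF vabs_nonneg])
      moreover have "W' \<le> vabs (T R)" unfolding W'_def by (rule inf_le2)
      ultimately show "vabs W' \<le> vabs (vabs (T R))" by simp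
    qed
  qed
  have b3: "vdisj (pos (y - a *\<^sub>R x)) (pos (a *\<^sub>R x - y))"
    using vdisj_pos_neg[of "y - a *\<^sub>R x"] by (simp add: neg_eq_pos)
  have "bd (pos (y - (a + 2 * \<delta>) *\<^sub>R x)) W'"
    by (rule bd_split[OF b1 b2 pos_nonneg pos_nonneg b3])
  moreover have "a + 2 * \<delta> = 2 * real (Suc k) * \<delta>" unfolding a_def by (simp add: algebra_simps)
  ultimately have "bd (pos (y - (2 * real (Suc k) * \<delta>) *\<^sub>R x)) W'" by simp
  then show ?case using v1 v2 W'0 unfolding v_def by blast
qed


lemma end_lemma:
  assumes T: "T \<in> Orth" and x: "0 \<le> (x::('a::{ordered_real_vector, lattice}))" and y: "0 \<le> y"
    and e: "\<forall>z. - y \<le> z \<and> z \<le> y \<longrightarrow> vabs (T z) \<le> e" and e0: "0 \<le> e"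
    and K: "0 < K" and W0: "0 \<le> W" and Wx: "W \<le> pos (T x)" and Wb: "bd (pos (y - K *\<^sub>R x)) W"
  shows "W \<le> (1/K) *\<^sub>R e"
proof -
  have lin: "linear T" and bp: "band_preserving T" using orthD[OF T] by auto
  define m where "m = inf x ((1/K) *\<^sub>R y)"
  define p where "p = pos (x - (1/K) *\<^sub>R y)"
  have xmp: "x = m + p" unfolding m_def p_def by (simp add: inf_pos_diff)
  have Ky: "0 \<le> (1/K) *\<^sub>R y" using K y by (simp add: scaleR_nonneg_nonneg)
  have m0: "0 \<le> m" unfolding m_def using x Ky by simp
  have "vabs (T m) \<le> (1/K) *\<^sub>R e"
  proof (rule bound_scale[OF e lin])
    show "0 < 1/K" using K by simp
    show "- ((1/K) *\<^sub>R y) \<le> m" using m0 Ky by (metis neg_le_0_iff_le order_trans)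
    show "m \<le> (1/K) *\<^sub>R y" unfolding m_def by simp
  qed
  moreover have "inf W (vabs (T p)) = 0"
  proof -
    have "x - (1/K) *\<^sub>R y = (1/K) *\<^sub>R (K *\<^sub>R x - y)" using K by (simp add: algebra_simps)
    then have "p = (1/K) *\<^sub>R pos (K *\<^sub>R x - y)" unfolding p_def using K by (simp add: pos_scale)
    moreover have "pos (K *\<^sub>R x - y) = neg (y - K *\<^sub>R x)" by (simp add: neg_eq_pos)
    ultimately have "p = (1/K) *\<^sub>R neg (y - K *\<^sub>R x)" by simp
    then have "vdisj p (pos (y - K *\<^sub>R x))"
      using vdisj_scale[of "neg (y - K *\<^sub>R x)" "pos (y - K *\<^sub>R x)" "1/K"] vdisj_pos_neg vdisj_sym by metis
    then have "vdisj (T p) (pos (y - K *\<^sub>R x))" by (rule bd_disj[OF bd_T[OF bp]])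
    then have "vdisj (T p) W" using Wb unfolding bd_def by blast
    then show ?thesis unfolding vdisj_def using vabs_of_nonneg[OF W0] by (simp add: inf_commute)
  qed
  moreover have "W \<le> vabs (T m) + vabs (T p)"
  proof -
    have "W \<le> vabs (T x)" using Wx pos_le_vabs order_trans by blast
    also have "\<dots> \<le> vabs (T m) + vabs (T p)" unfolding xmp lin_add[OF lin] by (rule vabs_triangle)
    finally show ?thesis .
  qed
  ultimately show ?thesis
  proof -
    assume a1: "vabs (T m) \<le> (1/K) *\<^sub>R e" and a2: "inf W (vabs (T p)) = 0"
      and a3: "W \<le> vabs (T m) + vabs (T p)"
    have Ke: "0 \<le> (1/K) *\<^sub>R e" using K e0 by (simp add: scaleR_nonneg_nonneg)
    have "W \<le> (1/K) *\<^sub>R e + vabs (T p)" using a1 a3 by (metis add_right_mono order_trans)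
    then have "W = inf W ((1/K) *\<^sub>R e + vabs (T p))" by (simp add: inf_absorb1)
    also have "\<dots> \<le> inf W ((1/K) *\<^sub>R e) + inf W (vabs (T p))"
      by (rule riesz_inf[OF W0 Ke vabs_nonneg])
    also have "\<dots> \<le> (1/K) *\<^sub>R e" using a2 by simp
    finally show ?thesis .
  qed
qed

lemma core:
  assumes A: "vl_archimedean TYPE(('a::{ordered_real_vector, lattice}))" and T: "T \<in> Orth" and x: "0 \<le> (x::('a::{ordered_real_vector, lattice}))" and y: "0 \<le> y"
  shows "inf (pos (T x)) (neg (T y)) = 0"
proof -
  define v where "v = inf (pos (T x)) (neg (T y))"
  have v0: "0 \<le> v" unfolding v_def by (simp add: pos_nonneg neg_nonneg)
  obtain ex where ex0: "0 \<le> ex" and ex: "\<forall>z. - x \<le> z \<and> z \<le> x \<longrightarrow> vabs (T z) \<le> ex"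
    using orth_bound[OF T x] by blast
  obtain ey where ey0: "0 \<le> ey" and ey: "\<forall>z. - y \<le> z \<and> z \<le> y \<longrightarrow> vabs (T z) \<le> ey"
    using orth_bound[OF T y] by blast
  have "real n *\<^sub>R v \<le> ex + ey" for n
  proof (cases "n = 0")
    case True then show ?thesis using ex0 ey0 by (simp add: add_nonneg_nonneg)
  next
    case False
    then have n1: "1 \<le> real n" by simp
    define \<delta> where "\<delta> = 1 / real n"
    have d: "0 < \<delta>" unfolding \<delta>_def using n1 by simp
    obtain W where W: "v \<le> \<delta> *\<^sub>R ex + W" "0 \<le> W" "W \<le> v"
      "bd (pos (y - (2 * real (n * n) * \<delta>) *\<^sub>R x)) W"
      using iter_lemma[OF T x y ex ex0 d, of "n * n"] unfolding v_def by blast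
    have K: "2 * real (n * n) * \<delta> = 2 * real n" unfolding \<delta>_def using n1 by simp
    have K0: "0 < 2 * real n" using n1 by simp
    have Wx: "W \<le> pos (T x)" using W(3) unfolding v_def by (meson inf_le1 order_trans)
    have "W \<le> (1 / (2 * real n)) *\<^sub>R ey"
      by (rule end_lemma[OF T x y ey ey0 K0 W(2) Wx W(4)[unfolded K]])
    then have "v \<le> \<delta> *\<^sub>R ex + (1 / (2 * real n)) *\<^sub>R ey" using W(1) by (metis add_left_mono order_trans)
    also have "\<dots> \<le> \<delta> *\<^sub>R ex + \<delta> *\<^sub>R ey"
    proof (rule add_left_mono, rule scaleR_right_mono)
      show "1 / (2 * real n) \<le> \<delta>" unfolding \<delta>_def using n1 by (simp add: frac_le)
    qed (rule ey0)
    finally have "v \<le> \<delta> *\<^sub>R (ex + ey)" by (simp add: scaleR_right_distrib)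
    then have "real n *\<^sub>R v \<le> real n *\<^sub>R (\<delta> *\<^sub>R (ex + ey))" by (rule scaleR_left_mono) simp
    then show ?thesis unfolding \<delta>_def using n1 by simp
  qed
  then show ?thesis using A v0 unfolding vl_archimedean_def v_def by blast
qed

lemma disj_diff_abs:
  assumes "0 \<le> (P::('a::{ordered_real_vector, lattice}))" "0 \<le> Q" "inf P Q = 0"
  shows "vabs (P - Q) = P + Q"
proof -
  have "(P + Q) - vabs (P - Q) = (P + Q) + inf (- (P - Q)) (P - Q)"
    unfolding vabs_def by (simp only: diff_conv_add_uminus neg_sup_v minus_minus)
  also have "\<dots> = inf ((P + Q) + - (P - Q)) ((P + Q) + (P - Q))" by (rule add_inf_l)
  also have "\<dots> = inf (2 *\<^sub>R Q) (2 *\<^sub>R P)" by (simp add: scaleR_2 algebra_simps)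
  also have "\<dots> = 2 *\<^sub>R inf Q P" by (simp add: scale_inf)
  also have "\<dots> = 0" using assms(3) by (simp add: inf_commute)
  finally show ?thesis by simp
qed

lemma vabs_add_disj:
  assumes "inf (pos (a::('a::{ordered_real_vector, lattice}))) (neg b) = 0" "inf (pos b) (neg a) = 0"
  shows "vabs (a + b) = vabs a + vabs b"
proof -
  define P where "P = pos a + pos b"
  define Q where "Q = neg a + neg b"
  have P0: "0 \<le> P" unfolding P_def by (simp add: pos_nonneg add_nonneg_nonneg)
  have Q0: "0 \<le> Q" unfolding Q_def by (simp add: neg_nonneg add_nonneg_nonneg)
  have ab: "a + b = P - Q" unfolding P_def Q_def using pos_neg[of a] pos_neg[of b] by (simp add: algebra_simps)
  have i1: "inf Q (pos a) = 0"
  proof (rule antisym)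
    have "inf (pos a) (neg a + neg b) \<le> inf (pos a) (neg a) + inf (pos a) (neg b)"
      by (rule riesz_inf) (simp_all add: pos_nonneg neg_nonneg)
    moreover have "inf (pos a) (neg a) + inf (pos a) (neg b) = 0" using assms(1) inf_pos_neg[of a] by simp
    ultimately show "inf Q (pos a) \<le> 0" unfolding Q_def by (metis inf_commute)
    show "0 \<le> inf Q (pos a)" using Q0 by (simp add: pos_nonneg)
  qed
  have i2: "inf Q (pos b) = 0"
  proof (rule antisym)
    have "inf (pos b) (neg a + neg b) \<le> inf (pos b) (neg a) + inf (pos b) (neg b)"
      by (rule riesz_inf) (simp_all add: pos_nonneg neg_nonneg)
    moreover have "inf (pos b) (neg a) + inf (pos b) (neg b) = 0" using assms(2) inf_pos_neg[of b] by simp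
    ultimately show "inf Q (pos b) \<le> 0" unfolding Q_def by (metis inf_commute)
    show "0 \<le> inf Q (pos b)" using Q0 by (simp add: pos_nonneg)
  qed
  have "inf Q P \<le> inf Q (pos a) + inf Q (pos b)" unfolding P_def
    by (rule riesz_inf[OF Q0 pos_nonneg pos_nonneg])
  then have "inf P Q \<le> 0" using i1 i2 by (simp add: inf_commute)
  then have "inf P Q = 0" using P0 Q0 by (simp add: antisym)
  then have "vabs (a + b) = P + Q" unfolding ab by (rule disj_diff_abs[OF P0 Q0])
  then show ?thesis unfolding P_def Q_def vabs_pos_neg by (simp add: algebra_simps)
qed

lemma abs_additive:
  assumes A: "vl_archimedean TYPE(('a::{ordered_real_vector, lattice}))" and T: "T \<in> Orth" and x: "0 \<le> (x::('a::{ordered_real_vector, lattice}))" and y: "0 \<le> y"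
  shows "vabs (T (x + y)) = vabs (T x) + vabs (T y)"
  using vabs_add_disj[OF core[OF A T x y] core[OF A T y x]] lin_add[of T x y] orthD[OF T] by simp


definition Tabs :: "(('a::{ordered_real_vector, lattice}) \<Rightarrow> ('a::{ordered_real_vector, lattice})) \<Rightarrow> ('a::{ordered_real_vector, lattice}) \<Rightarrow> ('a::{ordered_real_vector, lattice})" where
  "Tabs T x = vabs (T (pos x)) - vabs (T (neg x))"

lemma Tabs_linear:
  assumes A: "vl_archimedean TYPE(('a::{ordered_real_vector, lattice}))" and T: "T \<in> Orth"
  shows "linear (Tabs (T::('a::{ordered_real_vector, lattice})\<Rightarrow>('a::{ordered_real_vector, lattice})))"
proof (rule linearI)
  note ad = abs_additive[OF A T]
  fix x y :: "'a::{ordered_real_vector, lattice}"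
  have "pos (x + y) + (neg x + neg y) = neg (x + y) + (pos x + pos y)"
    by (simp only: pos_eq) (simp add: algebra_simps)
  then have "vabs (T (pos (x + y) + (neg x + neg y))) = vabs (T (neg (x + y) + (pos x + pos y)))" by simp
  then have "vabs (T (pos (x + y))) + (vabs (T (neg x)) + vabs (T (neg y))) =
        vabs (T (neg (x + y))) + (vabs (T (pos x)) + vabs (T (pos y)))"
    by (simp add: ad pos_nonneg neg_nonneg add_nonneg_nonneg)
  then show "Tabs T (x + y) = Tabs T x + Tabs T y" unfolding Tabs_def by (simp add: algebra_simps)
next
  fix c :: real and x :: "'a::{ordered_real_vector, lattice}"
  show "Tabs T (c *\<^sub>R x) = c *\<^sub>R Tabs T x"
  proof (cases "0 \<le> c")
    case True
    then show ?thesis unfolding Tabs_def using orthD[OF T]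
      by (simp add: pos_scale neg_scale lin_scale vabs_scale scaleR_diff_right)
  next
    case False
    then have c: "c *\<^sub>R x = \<bar>c\<bar> *\<^sub>R (- x)" by simp
    have "pos (c *\<^sub>R x) = \<bar>c\<bar> *\<^sub>R neg x" unfolding c pos_scale[OF abs_ge_zero] pos_minus ..
    moreover have "neg (c *\<^sub>R x) = \<bar>c\<bar> *\<^sub>R pos x" unfolding c neg_scale[OF abs_ge_zero] neg_eq_pos[of "-x"] by simp
    ultimately have "Tabs T (c *\<^sub>R x) = vabs (T (\<bar>c\<bar> *\<^sub>R neg x)) - vabs (T (\<bar>c\<bar> *\<^sub>R pos x))"
      by (simp only: Tabs_def)
    also have "\<dots> = \<bar>c\<bar> *\<^sub>R vabs (T (neg x)) - \<bar>c\<bar> *\<^sub>R vabs (T (pos x))"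
      using orthD[OF T] by (simp only: lin_scale vabs_scale abs_abs)
    also have "\<dots> = c *\<^sub>R Tabs T x"
    proof -
      have ac: "\<bar>c\<bar> = - c" using False by simp
      show ?thesis unfolding ac Tabs_def scaleR_diff_right scaleR_minus_left by simp
    qed
    finally show ?thesis .
  qed
qed

lemma Tabs_pos: "linear T \<Longrightarrow> 0 \<le> (x::('a::{ordered_real_vector, lattice})) \<Longrightarrow> Tabs T x = vabs (T x)"
  unfolding Tabs_def by (simp add: pos_of_nonneg neg_of_nonneg lin_0)

lemma Tabs_mono:
  assumes A: "vl_archimedean TYPE(('a::{ordered_real_vector, lattice}))" and T: "T \<in> Orth" and ab: "a \<le> (b::('a::{ordered_real_vector, lattice}))"
  shows "Tabs T a \<le> Tabs T b"
proof -
  have "Tabs T b - Tabs T a = Tabs T (b - a)" by (simp add: lin_diff[OF Tabs_linear[OF A T]])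
  also have "\<dots> = vabs (T (b - a))" using ab orthD[OF T] by (simp add: Tabs_pos)
  finally have "0 \<le> Tabs T b - Tabs T a" by (simp add: vabs_nonneg)
  then show ?thesis by simp
qed

lemma Tabs_vabs_le:
  assumes A: "vl_archimedean TYPE(('a::{ordered_real_vector, lattice}))" and T: "T \<in> Orth"
  shows "vabs (Tabs T x) \<le> vabs (T (vabs (x::('a::{ordered_real_vector, lattice}))))"
proof -
  have "vabs (Tabs T x) \<le> vabs (vabs (T (pos x))) + vabs (- vabs (T (neg x)))"
    unfolding Tabs_def diff_conv_add_uminus by (rule vabs_triangle)
  also have "\<dots> = vabs (T (pos x)) + vabs (T (neg x))" by (simp add: vabs_of_nonneg vabs_nonneg)
  also have "\<dots> = vabs (T (vabs x))" unfolding vabs_pos_neg[of x]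
    by (simp add: abs_additive[OF A T] pos_nonneg neg_nonneg)
  finally show ?thesis .
qed

lemma Tabs_orth:
  assumes A: "vl_archimedean TYPE(('a::{ordered_real_vector, lattice}))" and T: "(T::('a::{ordered_real_vector, lattice})\<Rightarrow>('a::{ordered_real_vector, lattice})) \<in> Orth"
  shows "Tabs T \<in> Orth"
  unfolding Orth_def
proof (intro CollectI conjI)
  show "linear (Tabs T)" by (rule Tabs_linear[OF A T])
  show "order_bounded_op (Tabs T)" unfolding order_bounded_op_def
    using Tabs_mono[OF A T] by blast
  show "band_preserving (Tabs T)" unfolding band_preserving_def
  proof (intro allI impI)
    fix x y :: "'a::{ordered_real_vector, lattice}" assume xy: "vdisj x y"
    have "vdisj (vabs x) y" by (rule vdisj_mono[OF _ xy]) (simp add: vabs_of_nonneg vabs_nonneg)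
    then have "vdisj (T (vabs x)) y" using orthD[OF T] unfolding band_preserving_def by blast
    then show "vdisj (Tabs T x) y" by (rule vdisj_mono[OF Tabs_vabs_le[OF A T]])
  qed
qed

lemma Tabs_sup:
  assumes A: "vl_archimedean TYPE(('a::{ordered_real_vector, lattice}))" and T: "(T::('a::{ordered_real_vector, lattice})\<Rightarrow>('a::{ordered_real_vector, lattice})) \<in> Orth"
  shows "orth_sup_of (Tabs T) T (\<lambda>x. - T x)"
  unfolding orth_sup_of_def orth_le_def
proof (intro conjI ballI allI impI)
  have lin: "linear T" using orthD[OF T] by simp
  show "Tabs T \<in> Orth" by (rule Tabs_orth[OF A T])
  fix x :: "'a::{ordered_real_vector, lattice}" assume x: "0 \<le> x"
  show "T x \<le> Tabs T x" "- T x \<le> Tabs T x" using Tabs_pos[OF lin x] vabs_ge by simp_all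
next
  fix Q :: "('a::{ordered_real_vector, lattice}) \<Rightarrow> ('a::{ordered_real_vector, lattice})" and x :: "'a::{ordered_real_vector, lattice}"
  assume "Q \<in> Orth" and h: "(\<forall>x. 0 \<le> x \<longrightarrow> T x \<le> Q x) \<and> (\<forall>x. 0 \<le> x \<longrightarrow> - T x \<le> Q x)" and x: "0 \<le> x"
  have lin: "linear T" using orthD[OF T] by simp
  show "Tabs T x \<le> Q x" unfolding Tabs_pos[OF lin x] using h x by (simp add: vabs_le)
qed

lemma Orth_add: "S \<in> Orth \<Longrightarrow> T \<in> Orth \<Longrightarrow> (\<lambda>x. S x + T x) \<in> (Orth::(('a::{ordered_real_vector, lattice})\<Rightarrow>('a::{ordered_real_vector, lattice})) set)"
  unfolding Orth_def
proof (intro CollectI conjI)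
  assume S: "S \<in> {T. linear T \<and> order_bounded_op T \<and> band_preserving T}"
    and T: "T \<in> {T. linear T \<and> order_bounded_op T \<and> band_preserving T}"
  show "linear (\<lambda>x. S x + T x)" using S T by (simp add: real_vector.linear_compose_add)
  show "order_bounded_op (\<lambda>x. S x + T x)" unfolding order_bounded_op_def
  proof (intro allI impI)
    fix a b :: "'a::{ordered_real_vector, lattice}" assume ab: "a \<le> b"
    obtain c1 d1 where 1: "\<And>x. a \<le> x \<and> x \<le> b \<Longrightarrow> c1 \<le> S x \<and> S x \<le> d1"
      using S ab unfolding order_bounded_op_def by blast
    obtain c2 d2 where 2: "\<And>x. a \<le> x \<and> x \<le> b \<Longrightarrow> c2 \<le> T x \<and> T x \<le> d2"
      using T ab unfolding order_bounded_op_def by blast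
    show "\<exists>c d. \<forall>x. a \<le> x \<and> x \<le> b \<longrightarrow> c \<le> S x + T x \<and> S x + T x \<le> d"
      by (rule exI[of _ "c1 + c2"], rule exI[of _ "d1 + d2"]) (use 1 2 add_mono in blast)
  qed
  show "band_preserving (\<lambda>x. S x + T x)" using S T unfolding band_preserving_def
    by (simp add: vdisj_add)
qed

lemma Orth_scale: "T \<in> Orth \<Longrightarrow> (\<lambda>x. c *\<^sub>R T x) \<in> (Orth::(('a::{ordered_real_vector, lattice})\<Rightarrow>('a::{ordered_real_vector, lattice})) set)"
  unfolding Orth_def
proof (intro CollectI conjI)
  assume T: "T \<in> {T. linear T \<and> order_bounded_op T \<and> band_preserving T}"
  show "linear (\<lambda>x. c *\<^sub>R T x)" using T by (simp add: real_vector.linear_compose_scale_right)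
  show "order_bounded_op (\<lambda>x. c *\<^sub>R T x)" unfolding order_bounded_op_def
  proof (intro allI impI)
    fix a b :: "'a::{ordered_real_vector, lattice}" assume ab: "a \<le> b"
    obtain c1 d1 where 1: "\<And>x. a \<le> x \<and> x \<le> b \<Longrightarrow> c1 \<le> T x \<and> T x \<le> d1"
      using T ab unfolding order_bounded_op_def by blast
    show "\<exists>c' d. \<forall>x. a \<le> x \<and> x \<le> b \<longrightarrow> c' \<le> c *\<^sub>R T x \<and> c *\<^sub>R T x \<le> d"
    proof (cases "0 \<le> c")
      case True
      show ?thesis by (rule exI[of _ "c *\<^sub>R c1"], rule exI[of _ "c *\<^sub>R d1"])
        (use 1 True scaleR_left_mono in blast)
    next
      case False
      then have c: "c \<le> 0" by simp
      show ?thesis by (rule exI[of _ "c *\<^sub>R d1"], rule exI[of _ "c *\<^sub>R c1"])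
        (use 1 c scaleR_left_mono_neg in blast)
    qed
  qed
  show "band_preserving (\<lambda>x. c *\<^sub>R T x)" using T unfolding band_preserving_def
    by (simp add: vdisj_scale)
qed

lemma Orth_zero: "(\<lambda>x. 0) \<in> (Orth::(('a::{ordered_real_vector, lattice})\<Rightarrow>('a::{ordered_real_vector, lattice})) set)"
  unfolding Orth_def order_bounded_op_def band_preserving_def
  by (auto simp: vdisj_zero real_vector.linear_zero)

lemma sup_formula: "(1/2::real) *\<^sub>R (a + (b + vabs (b + (-1) *\<^sub>R a))) = sup (a::('a::{ordered_real_vector, lattice})) b"
proof -
  have "a + (b + vabs (b + (-1) *\<^sub>R a)) = a + (b + (2 *\<^sub>R pos (b - a) - (b - a)))"
    by (simp add: vabs_eq_pos)
  also have "\<dots> = 2 *\<^sub>R (a + pos (b - a))" by (simp add: scaleR_2 algebra_simps)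
  also have "a + pos (b - a) = sup b a" unfolding pos_def add_sup_l by simp
  finally show ?thesis by (simp add: sup_commute)
qed

lemma sublattice_gen:
  assumes A: "vl_archimedean TYPE(('a::{ordered_real_vector, lattice}))" and sub: "AA \<subseteq> (Orth::(('a::{ordered_real_vector, lattice})\<Rightarrow>('a::{ordered_real_vector, lattice})) set)"
    and z: "(\<lambda>x. 0) \<in> AA"
    and ad: "\<forall>S\<in>AA. \<forall>T\<in>AA. (\<lambda>x. S x + T x) \<in> AA"
    and sc: "\<forall>c::real. \<forall>T\<in>AA. (\<lambda>x. c *\<^sub>R T x) \<in> AA"
    and ab: "\<forall>T\<in>AA. Tabs T \<in> AA"
  shows "orth_vector_sublattice AA \<and> (\<forall>T\<in>AA. \<exists>R\<in>AA. orth_sup_of R T (\<lambda>x. - T x))"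
proof -
  have sups: "\<exists>R\<in>AA. orth_sup_of R S T" if S: "S \<in> AA" and T: "T \<in> AA" for S T
  proof -
    define D where "D = (\<lambda>x. T x + (-1::real) *\<^sub>R S x)"
    have "(\<lambda>x. (-1::real) *\<^sub>R S x) \<in> AA" using sc S by blast
    then have D: "D \<in> AA" unfolding D_def by (rule bspec[OF bspec[OF ad T]])
    define R where "R = (\<lambda>x. (1/2::real) *\<^sub>R (S x + (T x + Tabs D x)))"
    have "Tabs D \<in> AA" using ab D by blast
    then have "(\<lambda>x. T x + Tabs D x) \<in> AA" by (rule bspec[OF bspec[OF ad T]])
    then have "(\<lambda>x. S x + (T x + Tabs D x)) \<in> AA" by (rule bspec[OF bspec[OF ad S]])
    then have R: "R \<in> AA" unfolding R_def by (rule bspec[OF spec[OF sc]])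
    have DO: "D \<in> Orth" using D sub by auto
    have Rx: "R x = sup (S x) (T x)" if "0 \<le> x" for x
      unfolding R_def Tabs_pos[OF conjunct1[OF orthD[OF DO]] that] unfolding D_def by (rule sup_formula)
    have "orth_sup_of R S T" unfolding orth_sup_of_def orth_le_def
    proof (intro conjI allI impI ballI)
      show "R \<in> Orth" using R sub by blast
      fix x :: "'a::{ordered_real_vector, lattice}" assume x: "0 \<le> x"
      show "S x \<le> R x" unfolding Rx[OF x] by (rule sup_ge1)
      show "T x \<le> R x" unfolding Rx[OF x] by (rule sup_ge2)
    next
      fix Q :: "('a::{ordered_real_vector, lattice}) \<Rightarrow> ('a::{ordered_real_vector, lattice})" and x :: "'a::{ordered_real_vector, lattice}"
      assume h: "(\<forall>x. 0 \<le> x \<longrightarrow> S x \<le> Q x) \<and> (\<forall>x. 0 \<le> x \<longrightarrow> T x \<le> Q x)" and x: "0 \<le> x"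
      show "R x \<le> Q x" unfolding Rx[OF x] using h x by (simp add: sup_least)
    qed
    then show ?thesis using R by blast
  qed
  have "\<forall>T\<in>AA. \<exists>R\<in>AA. orth_sup_of R T (\<lambda>x. - T x)"
  proof
    fix T assume T: "T \<in> AA"
    then have "Tabs T \<in> AA" using ab by blast
    moreover have "orth_sup_of (Tabs T) T (\<lambda>x. - T x)" using Tabs_sup[OF A] T sub by blast
    ultimately show "\<exists>R\<in>AA. orth_sup_of R T (\<lambda>x. - T x)" by blast
  qed
  moreover have "orth_vector_sublattice AA" unfolding orth_vector_sublattice_def
    using sub z ad sc sups by blast
  ultimately show ?thesis by blast
qed


section \<open>Topology\<close>

lemma solid_scale: "solid_set W \<Longrightarrow> (w::('a::{ordered_real_vector, lattice})) \<in> W \<Longrightarrow> \<bar>t\<bar> \<le> 1 \<Longrightarrow> t *\<^sub>R w \<in> W"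
proof -
  assume W: "solid_set W" and w: "w \<in> W" and t: "\<bar>t\<bar> \<le> 1"
  have "vabs (t *\<^sub>R w) = \<bar>t\<bar> *\<^sub>R vabs w" by (rule vabs_scale)
  also have "\<dots> \<le> 1 *\<^sub>R vabs w" by (rule scaleR_right_mono[OF t vabs_nonneg])
  finally show ?thesis using W w unfolding solid_set_def by auto
qed

lemma solid_vabs: "solid_set W \<Longrightarrow> (w::('a::{ordered_real_vector, lattice})) \<in> W \<Longrightarrow> vabs w \<in> W"
  unfolding solid_set_def by (metis order_refl vabs_nonneg vabs_of_nonneg)

lemma zero_nbhd_Int: "zero_nbhd \<tau> U \<Longrightarrow> zero_nbhd \<tau> V \<Longrightarrow> zero_nbhd \<tau> (U \<inter> V)"
  unfolding zero_nbhd_def by (metis Int_iff Int_mono openin_Int)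

lemma zero_nbhd_UNIV: "linear_topology \<tau> \<Longrightarrow> zero_nbhd \<tau> UNIV"
  unfolding zero_nbhd_def linear_topology_def by (metis UNIV_I openin_topspace subset_UNIV)

lemma zero_nbhd_0: "zero_nbhd \<tau> U \<Longrightarrow> 0 \<in> U"
  unfolding zero_nbhd_def by blast

lemma solid_nbhd: "locally_solid \<tau> \<Longrightarrow> zero_nbhd \<tau> U \<Longrightarrow> \<exists>V. zero_nbhd \<tau> V \<and> solid_set V \<and> V \<subseteq> (U::('a::{ordered_real_vector, lattice}) set)"
  unfolding locally_solid_def by blast

lemma bounded_dom:
  assumes LS: "locally_solid \<tau>" and B: "top_bounded \<tau> B"
    and dom: "\<forall>x\<in>B'. \<exists>b\<in>B. vabs x \<le> vabs (b::('a::{ordered_real_vector, lattice}))"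
  shows "top_bounded \<tau> B'"
  unfolding top_bounded_def
proof (intro allI impI)
  fix U assume U: "zero_nbhd \<tau> U"
  obtain W where W: "zero_nbhd \<tau> W" "solid_set W" "W \<subseteq> U" using solid_nbhd[OF LS U] by blast
  obtain c where c: "c > 0" "B \<subseteq> (\<lambda>x. c *\<^sub>R x) ` W" using B W(1) unfolding top_bounded_def by blast
  have "B' \<subseteq> (\<lambda>x. c *\<^sub>R x) ` U"
  proof
    fix x assume x: "x \<in> B'"
    obtain b where b: "b \<in> B" "vabs x \<le> vabs b" using dom x by blast
    obtain w where w: "w \<in> W" "b = c *\<^sub>R w" using c(2) b(1) by blast
    have "vabs ((1/c) *\<^sub>R x) = (1/c) *\<^sub>R vabs x" using c(1) by (simp add: vabs_scale)
    also have "\<dots> \<le> (1/c) *\<^sub>R vabs b" using c(1) b(2) by (simp add: scaleR_left_mono)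
    also have "\<dots> = vabs w" using c(1) w(2) by (simp add: vabs_scale)
    finally have "(1/c) *\<^sub>R x \<in> W" using W(2) w(1) unfolding solid_set_def by blast
    then have "(1/c) *\<^sub>R x \<in> U" using W(3) by blast
    moreover have "x = c *\<^sub>R ((1/c) *\<^sub>R x)" using c(1) by simp
    ultimately show "x \<in> (\<lambda>x. c *\<^sub>R x) ` U" by blast
  qed
  then show "\<exists>c>0. B' \<subseteq> (\<lambda>x. c *\<^sub>R x) ` U" using c(1) by blast
qed

lemma bounded_subset: "top_bounded \<tau> B \<Longrightarrow> B' \<subseteq> B \<Longrightarrow> top_bounded \<tau> B'"
  unfolding top_bounded_def by (meson order_trans)

lemma bounded_scale_pos:
  assumes B: "top_bounded \<tau> B" and k: "0 < k"
  shows "top_bounded \<tau> ((\<lambda>x::('a::{ordered_real_vector, lattice}). k *\<^sub>R x) ` B)"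
  unfolding top_bounded_def
proof (intro allI impI)
  fix U assume U: "zero_nbhd \<tau> U"
  obtain c where c: "c > 0" "B \<subseteq> (\<lambda>x. c *\<^sub>R x) ` U" using B U unfolding top_bounded_def by blast
  have "(\<lambda>x. k *\<^sub>R x) ` B \<subseteq> (\<lambda>x. (k * c) *\<^sub>R x) ` U"
  proof
    fix z assume "z \<in> (\<lambda>x. k *\<^sub>R x) ` B"
    then obtain b where b: "b \<in> B" "z = k *\<^sub>R b" by blast
    obtain u where u: "u \<in> U" "b = c *\<^sub>R u" using c(2) b(1) by blast
    have "z = (k * c) *\<^sub>R u" using b(2) u(2) by simp
    then show "z \<in> (\<lambda>x. (k * c) *\<^sub>R x) ` U" using u(1) by blast
  qed
  then show "\<exists>c>0. (\<lambda>x. k *\<^sub>R x) ` B \<subseteq> (\<lambda>x. c *\<^sub>R x) ` U" using c(1) k by (meson mult_pos_pos)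
qed

lemma bounded_scale:
  assumes LS: "locally_solid \<tau>" and B: "top_bounded \<tau> B"
  shows "top_bounded \<tau> ((\<lambda>x::('a::{ordered_real_vector, lattice}). t *\<^sub>R x) ` B)"
proof (rule bounded_dom[OF LS bounded_scale_pos[OF B, of "\<bar>t\<bar> + 1"]])
  show "\<forall>x\<in>(\<lambda>x. t *\<^sub>R x) ` B. \<exists>b\<in>(\<lambda>x. (\<bar>t\<bar> + 1) *\<^sub>R x) ` B. vabs x \<le> vabs b"
  proof
    fix x assume "x \<in> (\<lambda>x. t *\<^sub>R x) ` B"
    then obtain b where b: "b \<in> B" "x = t *\<^sub>R b" by blast
    have "vabs x = \<bar>t\<bar> *\<^sub>R vabs b" using b(2) by (simp add: vabs_scale)
    also have "\<dots> \<le> (\<bar>t\<bar> + 1) *\<^sub>R vabs b" by (rule scaleR_right_mono[OF _ vabs_nonneg]) linarith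
    also have "\<dots> = vabs ((\<bar>t\<bar> + 1) *\<^sub>R b)" by (simp add: vabs_scale)
    finally show "\<exists>b\<in>(\<lambda>x. (\<bar>t\<bar> + 1) *\<^sub>R x) ` B. vabs x \<le> vabs b" using b(1) by blast
  qed
  show "0 < \<bar>t\<bar> + 1" using abs_ge_zero[of t] by linarith
qed

lemma add_nbhd:
  assumes L: "linear_topology \<tau>" and U: "zero_nbhd \<tau> U"
  shows "\<exists>W. zero_nbhd \<tau> W \<and> (\<forall>a\<in>W. \<forall>b\<in>W. a + b \<in> (U::('a::{ordered_real_vector, lattice}) set))"
proof -
  obtain V where V: "openin \<tau> V" "0 \<in> V" "V \<subseteq> U" using U unfolding zero_nbhd_def by blast
  have top: "topspace \<tau> = UNIV" and c: "continuous_map (prod_topology \<tau> \<tau>) \<tau> (\<lambda>(x, y). x + y)"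
    using L unfolding linear_topology_def by auto
  have "openin (prod_topology \<tau> \<tau>) {p \<in> topspace (prod_topology \<tau> \<tau>). (\<lambda>(x, y). x + y) p \<in> V}"
    by (rule openin_continuous_map_preimage[OF c V(1)])
  moreover have "{p \<in> topspace (prod_topology \<tau> \<tau>). (\<lambda>(x, y). x + y) p \<in> V} = {p. (\<lambda>(x, y). x + y) p \<in> V}"
    using top by (simp only: topspace_prod_topology UNIV_Times_UNIV mem_Collect_eq UNIV_I simp_thms)
  ultimately have o: "openin (prod_topology \<tau> \<tau>) {p. (\<lambda>(x, y). x + y) p \<in> V}" by simp
  have mem: "(0, 0) \<in> {p. (\<lambda>(x, y). x + y) p \<in> V}" using V(2) by simp
  have "\<exists>U1 U2. openin \<tau> U1 \<and> openin \<tau> U2 \<and> 0 \<in> U1 \<and> 0 \<in> U2 \<and> U1 \<times> U2 \<subseteq> {p. (\<lambda>(x, y). x + y) p \<in> V}"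
    using o[unfolded openin_prod_topology_alt, rule_format, OF mem] .
  then obtain V1 V2 where v: "openin \<tau> V1" "openin \<tau> V2" "0 \<in> V1" "0 \<in> V2"
    "V1 \<times> V2 \<subseteq> {p. (\<lambda>(x, y). x + y) p \<in> V}" by blast
  have "openin \<tau> (V1 \<inter> V2)" using v(1,2) by (rule openin_Int)
  then have "zero_nbhd \<tau> (V1 \<inter> V2)" unfolding zero_nbhd_def using v(3,4) by blast
  moreover have "\<forall>a\<in>V1 \<inter> V2. \<forall>b\<in>V1 \<inter> V2. a + b \<in> U"
  proof (intro ballI)
    fix a b assume "a \<in> V1 \<inter> V2" "b \<in> V1 \<inter> V2"
    then have "(a, b) \<in> V1 \<times> V2" by blast
    then have "(a, b) \<in> {p. (\<lambda>(x, y). x + y) p \<in> V}" using v(5) by blast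
    then have "a + b \<in> V" by simp
    then show "a + b \<in> U" using V(3) by blast
  qed
  ultimately show ?thesis by blast
qed

lemma bounded_sum:
  assumes L: "linear_topology \<tau>" and LS: "locally_solid \<tau>"
    and B1: "top_bounded \<tau> B1" and B2: "top_bounded \<tau> B2"
  shows "top_bounded \<tau> {a + b | a b. a \<in> B1 \<and> b \<in> (B2::('a::{ordered_real_vector, lattice}) set)}"
  unfolding top_bounded_def
proof (intro allI impI)
  fix U assume U: "zero_nbhd \<tau> U"
  obtain W where W: "zero_nbhd \<tau> W" "\<forall>a\<in>W. \<forall>b\<in>W. a + b \<in> U" using add_nbhd[OF L U] by blast
  obtain W' where W': "zero_nbhd \<tau> W'" "solid_set W'" "W' \<subseteq> W" using solid_nbhd[OF LS W(1)] by blast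
  obtain c1 where c1: "c1 > 0" "B1 \<subseteq> (\<lambda>x. c1 *\<^sub>R x) ` W'" using B1 W'(1) unfolding top_bounded_def by blast
  obtain c2 where c2: "c2 > 0" "B2 \<subseteq> (\<lambda>x. c2 *\<^sub>R x) ` W'" using B2 W'(1) unfolding top_bounded_def by blast
  define c where "c = max c1 c2"
  have cp: "c > 0" unfolding c_def using c1 by simp
  have res: "B \<subseteq> (\<lambda>x. c *\<^sub>R x) ` W'" if hB: "B \<subseteq> (\<lambda>x. d *\<^sub>R x) ` W'" and hd: "0 < d" "d \<le> c" for B d
  proof
    fix x assume "x \<in> B"
    then obtain w where w: "w \<in> W'" "x = d *\<^sub>R w" using hB by blast
    have "\<bar>d / c\<bar> \<le> 1" using hd cp by simp
    then have "(d / c) *\<^sub>R w \<in> W'" by (rule solid_scale[OF W'(2) w(1)])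
    moreover have "x = c *\<^sub>R ((d / c) *\<^sub>R w)" using w(2) cp by simp
    ultimately show "x \<in> (\<lambda>x. c *\<^sub>R x) ` W'" by blast
  qed
  have b1: "B1 \<subseteq> (\<lambda>x. c *\<^sub>R x) ` W'" by (rule res[OF c1(2) c1(1)]) (simp add: c_def)
  have b2: "B2 \<subseteq> (\<lambda>x. c *\<^sub>R x) ` W'" by (rule res[OF c2(2) c2(1)]) (simp add: c_def)
  have "{a + b | a b. a \<in> B1 \<and> b \<in> B2} \<subseteq> (\<lambda>x. c *\<^sub>R x) ` U"
  proof
    fix z assume "z \<in> {a + b | a b. a \<in> B1 \<and> b \<in> B2}"
    then obtain a b where ab: "z = a + b" "a \<in> B1" "b \<in> B2" by blast
    obtain w1 where w1: "w1 \<in> W'" "a = c *\<^sub>R w1" using b1 ab(2) by blast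
    obtain w2 where w2: "w2 \<in> W'" "b = c *\<^sub>R w2" using b2 ab(3) by blast
    have "w1 + w2 \<in> U" using W(2) W'(3) w1(1) w2(1) by blast
    moreover have "z = c *\<^sub>R (w1 + w2)" using ab(1) w1(2) w2(2) by (simp add: scaleR_right_distrib)
    ultimately show "z \<in> (\<lambda>x. c *\<^sub>R x) ` U" by blast
  qed
  then show "\<exists>c>0. {a + b | a b. a \<in> B1 \<and> b \<in> B2} \<subseteq> (\<lambda>x. c *\<^sub>R x) ` U" using cp by blast
qed

lemma bounded_zero: "top_bounded \<tau> {0::('a::{ordered_real_vector, lattice})}"
  unfolding top_bounded_def
proof (intro allI impI)
  fix U assume "zero_nbhd \<tau> U"
  then have "0 \<in> U" by (rule zero_nbhd_0)
  then have "{0::('a::{ordered_real_vector, lattice})} \<subseteq> (\<lambda>x. 1 *\<^sub>R x) ` U" by force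
  then show "\<exists>c>0. {0::('a::{ordered_real_vector, lattice})} \<subseteq> (\<lambda>x. c *\<^sub>R x) ` U" by (meson zero_less_one)
qed


lemma cont_add:
  assumes L: "linear_topology \<tau>" and f: "continuous_map \<tau> \<tau> f" and g: "continuous_map \<tau> \<tau> g"
  shows "continuous_map \<tau> \<tau> (\<lambda>x. f x + (g x::('a::{ordered_real_vector, lattice})))"
proof -
  have c: "continuous_map (prod_topology \<tau> \<tau>) \<tau> (\<lambda>(x, y). x + y)"
    using L unfolding linear_topology_def by blast
  have "continuous_map \<tau> \<tau> ((\<lambda>(x, y). x + y) \<circ> (\<lambda>x. (f x, g x)))"
    by (rule continuous_map_compose[OF continuous_map_pairedI[OF f g] c])
  then show ?thesis by (simp add: o_def)
qed

lemma cont_scale: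
  assumes L: "linear_topology \<tau>" and f: "continuous_map \<tau> \<tau> f"
  shows "continuous_map \<tau> \<tau> (\<lambda>x. t *\<^sub>R (f x::('a::{ordered_real_vector, lattice})))"
proof -
  have c: "continuous_map (prod_topology euclideanreal \<tau>) \<tau> (\<lambda>(c, x). c *\<^sub>R x)"
    using L unfolding linear_topology_def by blast
  have k: "continuous_map \<tau> euclideanreal (\<lambda>x. t)" by simp
  have "continuous_map \<tau> \<tau> ((\<lambda>(c, x). c *\<^sub>R x) \<circ> (\<lambda>x. (t, f x)))"
    by (rule continuous_map_compose[OF continuous_map_pairedI[OF k f] c])
  then show ?thesis by (simp add: o_def)
qed

lemma cont_const:
  assumes L: "linear_topology \<tau>"
  shows "continuous_map \<tau> \<tau> (\<lambda>x. k::('a::{ordered_real_vector, lattice}))"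
  using L unfolding linear_topology_def by simp

lemma cont_lip:
  assumes L: "linear_topology \<tau>" and LS: "locally_solid \<tau>"
    and lip: "\<And>a b. vabs (f a - f b) \<le> vabs (a - (b::('a::{ordered_real_vector, lattice})))"
  shows "continuous_map \<tau> \<tau> f"
proof -
  have top: "topspace \<tau> = UNIV" using L unfolding linear_topology_def by blast
  have tr: "continuous_map \<tau> \<tau> (\<lambda>x. x + k)" for k :: "'a::{ordered_real_vector, lattice}"
    using cont_add[OF L continuous_map_id[unfolded id_def] cont_const[OF L]] .
  have opn: "openin \<tau> {x. x + k \<in> Ov}" if "openin \<tau> Ov" for Ov k
    using openin_continuous_map_preimage[OF tr that, of k] top by simp
  show ?thesis unfolding continuous_map_def
  proof (intro conjI allI impI)
    show "f \<in> topspace \<tau> \<rightarrow> topspace \<tau>" using top by simp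
    fix Ov assume Ov: "openin \<tau> Ov"
    have "openin \<tau> {x. f x \<in> Ov}"
    proof (subst openin_subopen, intro ballI)
      fix a assume a: "a \<in> {x. f x \<in> Ov}"
      have Ov': "openin \<tau> {z. z + f a \<in> Ov}" by (rule opn[OF Ov])
      have "zero_nbhd \<tau> {z. z + f a \<in> Ov}" unfolding zero_nbhd_def using Ov' a by auto
      then obtain W where W: "zero_nbhd \<tau> W" "solid_set W" "W \<subseteq> {z. z + f a \<in> Ov}"
        using solid_nbhd[OF LS] by blast
      obtain V where V: "openin \<tau> V" "0 \<in> V" "V \<subseteq> W" using W(1) unfolding zero_nbhd_def by blast
      have T: "openin \<tau> {z. z + (- a) \<in> V}" by (rule opn[OF V(1)])
      have "{z. z + (- a) \<in> V} \<subseteq> {x. f x \<in> Ov}"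
      proof
        fix z assume "z \<in> {z. z + (- a) \<in> V}"
        then have "z - a \<in> W" using V(3) by auto
        moreover have "vabs (f z - f a) \<le> vabs (z - a)" by (rule lip)
        ultimately have "f z - f a \<in> W" using W(2) unfolding solid_set_def by blast
        then show "z \<in> {x. f x \<in> Ov}" using W(3) by auto
      qed
      moreover have "a \<in> {z. z + (- a) \<in> V}" using V(2) by simp
      ultimately show "\<exists>T. openin \<tau> T \<and> a \<in> T \<and> T \<subseteq> {x. f x \<in> Ov}" using T by blast
    qed
    then show "openin \<tau> {x \<in> topspace \<tau>. f x \<in> Ov}" using top by simp
  qed
qed

lemma vabs_lip: "vabs (vabs a - vabs b) \<le> vabs (a - (b::('a::{ordered_real_vector, lattice})))"
proof (rule vabs_le)
  have "vabs a \<le> vabs (a - b) + vabs b" using vabs_triangle[of "a - b" b] by simp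
  then show "vabs a - vabs b \<le> vabs (a - b)" by (simp add: diff_le_eq)
  have "vabs b \<le> vabs (b - a) + vabs a" using vabs_triangle[of "b - a" a] by simp
  moreover have "vabs (b - a) = vabs (a - b)" using vabs_neg[of "a - b"] by simp
  ultimately show "- (vabs a - vabs b) \<le> vabs (a - b)" by (simp add: diff_le_eq)
qed

lemma cont_vabs: "linear_topology \<tau> \<Longrightarrow> locally_solid \<tau> \<Longrightarrow> continuous_map \<tau> \<tau> (vabs::('a::{ordered_real_vector, lattice})\<Rightarrow>('a::{ordered_real_vector, lattice}))"
  by (rule cont_lip, assumption, assumption, rule vabs_lip)

lemma pos_half: "pos (x::('a::{ordered_real_vector, lattice})) = (1/2::real) *\<^sub>R (x + vabs x)"
proof -
  have "x + vabs x = 2 *\<^sub>R pos x" by (simp add: vabs_eq_pos)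
  then show ?thesis by simp
qed

lemma cont_pos:
  assumes L: "linear_topology \<tau>" and LS: "locally_solid \<tau>"
  shows "continuous_map \<tau> \<tau> (pos::('a::{ordered_real_vector, lattice})\<Rightarrow>('a::{ordered_real_vector, lattice}))"
proof -
  have "continuous_map \<tau> \<tau> (\<lambda>x. (1/2::real) *\<^sub>R (x + vabs (x::('a::{ordered_real_vector, lattice}))))"
    by (rule cont_scale[OF L cont_add[OF L continuous_map_id[unfolded id_def] cont_vabs[OF L LS]]])
  moreover have "pos = (\<lambda>x. (1/2::real) *\<^sub>R (x + vabs (x::('a::{ordered_real_vector, lattice}))))" using pos_half by blast
  ultimately show ?thesis by simp
qed

lemma cont_comp: "continuous_map \<tau> \<tau> f \<Longrightarrow> continuous_map \<tau> \<tau> g \<Longrightarrow> continuous_map \<tau> \<tau> (\<lambda>x. g (f x))"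
  using continuous_map_compose[of \<tau> \<tau> f \<tau> g] by (simp add: o_def)

lemma cont_Tabs:
  assumes L: "linear_topology \<tau>" and LS: "locally_solid \<tau>" and T: "continuous_map \<tau> \<tau> (T::('a::{ordered_real_vector, lattice})\<Rightarrow>('a::{ordered_real_vector, lattice}))"
  shows "continuous_map \<tau> \<tau> (Tabs T)"
proof -
  have p: "continuous_map \<tau> \<tau> (\<lambda>x. vabs (T (pos x)))"
    by (rule cont_comp[OF cont_comp[OF cont_pos[OF L LS] T] cont_vabs[OF L LS]])
  have "continuous_map \<tau> \<tau> (\<lambda>x. pos ((-1::real) *\<^sub>R x))"
    by (rule cont_comp[OF cont_scale[OF L continuous_map_id[unfolded id_def]] cont_pos[OF L LS]])
  then have "continuous_map \<tau> \<tau> (\<lambda>x. vabs (T (pos ((-1::real) *\<^sub>R x))))"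
    by (rule cont_comp[OF cont_comp[OF _ T] cont_vabs[OF L LS]])
  then have "continuous_map \<tau> \<tau> (\<lambda>x. vabs (T (pos x)) + (-1::real) *\<^sub>R vabs (T (pos ((-1::real) *\<^sub>R x))))"
    by (rule cont_add[OF L p cont_scale[OF L]])
  moreover have "Tabs T = (\<lambda>x. vabs (T (pos x)) + (-1::real) *\<^sub>R vabs (T (pos ((-1::real) *\<^sub>R x))))"
    unfolding Tabs_def by (rule ext) (simp add: pos_minus)
  ultimately show ?thesis by simp
qed

section \<open>The three classes\<close>

lemma Orth_n_closed:
  assumes A: "vl_archimedean TYPE(('a::{ordered_real_vector, lattice}))" and LS: "locally_solid (\<tau>::('a::{ordered_real_vector, lattice}) topology)"
  shows "(\<lambda>x. 0) \<in> Orth_n \<tau>" "\<forall>S\<in>Orth_n \<tau>. \<forall>T\<in>Orth_n \<tau>. (\<lambda>x. S x + T x) \<in> Orth_n \<tau>"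
    "\<forall>c::real. \<forall>T\<in>Orth_n \<tau>. (\<lambda>x. c *\<^sub>R T x) \<in> Orth_n \<tau>" "\<forall>T\<in>Orth_n \<tau>. Tabs T \<in> Orth_n \<tau>"
proof -
  have L: "linear_topology \<tau>" using LS unfolding locally_solid_def by blast
  have "(\<lambda>x::('a::{ordered_real_vector, lattice}). 0::('a::{ordered_real_vector, lattice})) ` UNIV \<subseteq> {0}" by blast
  then have "top_bounded \<tau> ((\<lambda>x::('a::{ordered_real_vector, lattice}). 0::('a::{ordered_real_vector, lattice})) ` UNIV)" by (rule bounded_subset[OF bounded_zero])
  then show "(\<lambda>x. 0) \<in> Orth_n \<tau>" unfolding Orth_n_def using Orth_zero zero_nbhd_UNIV[OF L] by blast
  show "\<forall>S\<in>Orth_n \<tau>. \<forall>T\<in>Orth_n \<tau>. (\<lambda>x. S x + T x) \<in> Orth_n \<tau>"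
  proof (intro ballI)
    fix S T assume S: "S \<in> Orth_n \<tau>" and T: "T \<in> Orth_n \<tau>"
    obtain U1 where U1: "zero_nbhd \<tau> U1" "top_bounded \<tau> (S ` U1)" using S unfolding Orth_n_def by blast
    obtain U2 where U2: "zero_nbhd \<tau> U2" "top_bounded \<tau> (T ` U2)" using T unfolding Orth_n_def by blast
    have "(\<lambda>x. S x + T x) ` (U1 \<inter> U2) \<subseteq> {a + b | a b. a \<in> S ` U1 \<and> b \<in> T ` U2}" by blast
    then have "top_bounded \<tau> ((\<lambda>x. S x + T x) ` (U1 \<inter> U2))"
      by (rule bounded_subset[OF bounded_sum[OF L LS U1(2) U2(2)]])
    moreover have "(\<lambda>x. S x + T x) \<in> Orth" using S T Orth_add unfolding Orth_n_def by blast
    ultimately show "(\<lambda>x. S x + T x) \<in> Orth_n \<tau>" unfolding Orth_n_def using zero_nbhd_Int[OF U1(1) U2(1)] by blast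
  qed
  show "\<forall>c::real. \<forall>T\<in>Orth_n \<tau>. (\<lambda>x. c *\<^sub>R T x) \<in> Orth_n \<tau>"
  proof (intro allI ballI)
    fix c :: real and T assume T: "T \<in> Orth_n \<tau>"
    obtain U where U: "zero_nbhd \<tau> U" "top_bounded \<tau> (T ` U)" using T unfolding Orth_n_def by blast
    have "(\<lambda>x. c *\<^sub>R T x) ` U = (\<lambda>y. c *\<^sub>R y) ` (T ` U)" by (simp add: image_image)
    then have "top_bounded \<tau> ((\<lambda>x. c *\<^sub>R T x) ` U)" using bounded_scale[OF LS U(2)] by simp
    moreover have "(\<lambda>x. c *\<^sub>R T x) \<in> Orth" using T Orth_scale unfolding Orth_n_def by blast
    ultimately show "(\<lambda>x. c *\<^sub>R T x) \<in> Orth_n \<tau>" unfolding Orth_n_def using U(1) by blast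
  qed
  show "\<forall>T\<in>Orth_n \<tau>. Tabs T \<in> Orth_n \<tau>"
  proof
    fix T assume T: "T \<in> Orth_n \<tau>"
    then have TO: "T \<in> Orth" unfolding Orth_n_def by blast
    obtain U where U: "zero_nbhd \<tau> U" "top_bounded \<tau> (T ` U)" using T unfolding Orth_n_def by blast
    obtain W where W: "zero_nbhd \<tau> W" "solid_set W" "W \<subseteq> U" using solid_nbhd[OF LS U(1)] by blast
    have "top_bounded \<tau> (Tabs T ` W)"
    proof (rule bounded_dom[OF LS U(2)], intro ballI)
      fix y assume "y \<in> Tabs T ` W"
      then obtain x where x: "x \<in> W" "y = Tabs T x" by blast
      have "vabs x \<in> U" using solid_vabs[OF W(2) x(1)] W(3) by blast
      moreover have "vabs y \<le> vabs (T (vabs x))" unfolding x(2) by (rule Tabs_vabs_le[OF A TO])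
      ultimately show "\<exists>b\<in>T ` U. vabs y \<le> vabs b" by blast
    qed
    then show "Tabs T \<in> Orth_n \<tau>" unfolding Orth_n_def using Tabs_orth[OF A TO] W(1) by blast
  qed
qed

lemma Orth_b_closed:
  assumes A: "vl_archimedean TYPE(('a::{ordered_real_vector, lattice}))" and LS: "locally_solid (\<tau>::('a::{ordered_real_vector, lattice}) topology)"
  shows "(\<lambda>x. 0) \<in> Orth_b \<tau>" "\<forall>S\<in>Orth_b \<tau>. \<forall>T\<in>Orth_b \<tau>. (\<lambda>x. S x + T x) \<in> Orth_b \<tau>"
    "\<forall>c::real. \<forall>T\<in>Orth_b \<tau>. (\<lambda>x. c *\<^sub>R T x) \<in> Orth_b \<tau>" "\<forall>T\<in>Orth_b \<tau>. Tabs T \<in> Orth_b \<tau>"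
proof -
  have L: "linear_topology \<tau>" using LS unfolding locally_solid_def by blast
  have "top_bounded \<tau> ((\<lambda>x::('a::{ordered_real_vector, lattice}). 0::('a::{ordered_real_vector, lattice})) ` B)" for B
    by (rule bounded_subset[OF bounded_zero]) blast
  then show "(\<lambda>x. 0) \<in> Orth_b \<tau>" unfolding Orth_b_def using Orth_zero by blast
  show "\<forall>S\<in>Orth_b \<tau>. \<forall>T\<in>Orth_b \<tau>. (\<lambda>x. S x + T x) \<in> Orth_b \<tau>"
  proof (intro ballI)
    fix S T assume S: "S \<in> Orth_b \<tau>" and T: "T \<in> Orth_b \<tau>"
    have "top_bounded \<tau> ((\<lambda>x. S x + T x) ` B)" if B: "top_bounded \<tau> B" for B
    proof -
      have "(\<lambda>x. S x + T x) ` B \<subseteq> {a + b | a b. a \<in> S ` B \<and> b \<in> T ` B}" by blast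
      moreover have "top_bounded \<tau> (S ` B)" "top_bounded \<tau> (T ` B)" using S T B unfolding Orth_b_def by blast+
      ultimately show ?thesis using bounded_subset[OF bounded_sum[OF L LS]] by blast
    qed
    moreover have "(\<lambda>x. S x + T x) \<in> Orth" using S T Orth_add unfolding Orth_b_def by blast
    ultimately show "(\<lambda>x. S x + T x) \<in> Orth_b \<tau>" unfolding Orth_b_def by blast
  qed
  show "\<forall>c::real. \<forall>T\<in>Orth_b \<tau>. (\<lambda>x. c *\<^sub>R T x) \<in> Orth_b \<tau>"
  proof (intro allI ballI)
    fix c :: real and T assume T: "T \<in> Orth_b \<tau>"
    have "top_bounded \<tau> ((\<lambda>x. c *\<^sub>R T x) ` B)" if B: "top_bounded \<tau> B" for B
    proof -
      have "(\<lambda>x. c *\<^sub>R T x) ` B = (\<lambda>y. c *\<^sub>R y) ` (T ` B)" by (simp add: image_image)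
      moreover have "top_bounded \<tau> (T ` B)" using T B unfolding Orth_b_def by blast
      ultimately show ?thesis using bounded_scale[OF LS] by simp
    qed
    moreover have "(\<lambda>x. c *\<^sub>R T x) \<in> Orth" using T Orth_scale unfolding Orth_b_def by blast
    ultimately show "(\<lambda>x. c *\<^sub>R T x) \<in> Orth_b \<tau>" unfolding Orth_b_def by blast
  qed
  show "\<forall>T\<in>Orth_b \<tau>. Tabs T \<in> Orth_b \<tau>"
  proof
    fix T assume T: "T \<in> Orth_b \<tau>"
    then have TO: "T \<in> Orth" unfolding Orth_b_def by blast
    have "top_bounded \<tau> (Tabs T ` B)" if B: "top_bounded \<tau> B" for B
    proof -
      have "top_bounded \<tau> (vabs ` B)"
        by (rule bounded_dom[OF LS B]) (auto simp: vabs_of_nonneg vabs_nonneg)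
      then have TB: "top_bounded \<tau> (T ` vabs ` B)" using T unfolding Orth_b_def by blast
      show ?thesis
      proof (rule bounded_dom[OF LS TB], intro ballI)
        fix y assume "y \<in> Tabs T ` B"
        then obtain x where x: "x \<in> B" "y = Tabs T x" by blast
        have "vabs y \<le> vabs (T (vabs x))" unfolding x(2) by (rule Tabs_vabs_le[OF A TO])
        then show "\<exists>b\<in>T ` vabs ` B. vabs y \<le> vabs b" using x(1) by blast
      qed
    qed
    then show "Tabs T \<in> Orth_b \<tau>" unfolding Orth_b_def using Tabs_orth[OF A TO] by blast
  qed
qed

lemma Orth_c_closed:
  assumes A: "vl_archimedean TYPE(('a::{ordered_real_vector, lattice}))" and LS: "locally_solid (\<tau>::('a::{ordered_real_vector, lattice}) topology)"
  shows "(\<lambda>x. 0) \<in> Orth_c \<tau>" "\<forall>S\<in>Orth_c \<tau>. \<forall>T\<in>Orth_c \<tau>. (\<lambda>x. S x + T x) \<in> Orth_c \<tau>"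
    "\<forall>c::real. \<forall>T\<in>Orth_c \<tau>. (\<lambda>x. c *\<^sub>R T x) \<in> Orth_c \<tau>" "\<forall>T\<in>Orth_c \<tau>. Tabs T \<in> Orth_c \<tau>"
proof -
  have L: "linear_topology \<tau>" using LS unfolding locally_solid_def by blast
  show "(\<lambda>x. 0) \<in> Orth_c \<tau>" unfolding Orth_c_def using Orth_zero cont_const[OF L] by blast
  show "\<forall>S\<in>Orth_c \<tau>. \<forall>T\<in>Orth_c \<tau>. (\<lambda>x. S x + T x) \<in> Orth_c \<tau>"
    unfolding Orth_c_def using Orth_add cont_add[OF L] by blast
  show "\<forall>c::real. \<forall>T\<in>Orth_c \<tau>. (\<lambda>x. c *\<^sub>R T x) \<in> Orth_c \<tau>"
    unfolding Orth_c_def using Orth_scale cont_scale[OF L] by blast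
  show "\<forall>T\<in>Orth_c \<tau>. Tabs T \<in> Orth_c \<tau>"
    unfolding Orth_c_def using Tabs_orth[OF A] cont_Tabs[OF L LS] by blast
qed

theorem mainTheorem1:
  fixes \<tau> :: "'a::{ordered_real_vector, lattice} topology"
  assumes "vl_archimedean TYPE('a)"
    and "locally_solid \<tau>"
  shows "orth_vector_sublattice (Orth_n \<tau>) \<and> orth_vector_sublattice (Orth_b \<tau>)
         \<and> orth_vector_sublattice (Orth_c \<tau>)
         \<and> (\<forall>A \<in> {Orth_n \<tau>, Orth_b \<tau>, Orth_c \<tau>}. \<forall>T\<in>A.
              \<exists>R\<in>A. orth_sup_of R T (\<lambda>x. - T x))"
proof -
  have n: "orth_vector_sublattice (Orth_n \<tau>) \<and> (\<forall>T\<in>Orth_n \<tau>. \<exists>R\<in>Orth_n \<tau>. orth_sup_of R T (\<lambda>x. - T x))"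
    by (rule sublattice_gen[OF assms(1) _ Orth_n_closed[OF assms]]) (auto simp: Orth_n_def)
  have b: "orth_vector_sublattice (Orth_b \<tau>) \<and> (\<forall>T\<in>Orth_b \<tau>. \<exists>R\<in>Orth_b \<tau>. orth_sup_of R T (\<lambda>x. - T x))"
    by (rule sublattice_gen[OF assms(1) _ Orth_b_closed[OF assms]]) (auto simp: Orth_b_def)
  have c: "orth_vector_sublattice (Orth_c \<tau>) \<and> (\<forall>T\<in>Orth_c \<tau>. \<exists>R\<in>Orth_c \<tau>. orth_sup_of R T (\<lambda>x. - T x))"
    by (rule sublattice_gen[OF assms(1) _ Orth_c_closed[OF assms]]) (auto simp: Orth_c_def)
  show ?thesis using n b c by blast
qed

end
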